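(* Let $G=(V,E,H)$ be a HEDG, let $(\mathcal{X}_v)_{v\in V}$ be standard Borel spaces and let $\mathbb{P}_V$ be a probability distribution on $\mathcal{X}_V=\prod_{v\in V}\mathcal{X}_v$. If $(G,\mathbb{P}_V)$ satisfies the component-wisely solvable structural equations property (csSEP), then $(G,\mathbb{P}_V)$ satisfies the strong marginal general directed global Markov property (smgdGMP).
   Context: A HEDG (directed graph with hyperedges) is a triple $G=(V,E,H)$: $V$ a finite set, $E\subseteq V\times V$ a set of directed edges $v\to w$ (self-loops allowed), and $H$ a simplicial complex on $V$ (a set of subsets of $V$ containing all singletons and closed under taking subsets); $\tilde H$ denotes the set of inclusion-maximal elements of $H$. $\mathrm{Pa}^G(v)=\{u:(u,v)\in E\}$; for $S\subseteq V$, $\mathrm{Pa}^G(S)=\bigcup_{v\in S}\mathrm{Pa}^G(v)$. $\mathrm{Anc}^G(v)$ (resp. $\mathrm{Desc}^G(v)$) is the set of nodes with a directed path to (resp. from) $v$, including $v$ itself; $\mathrm{Sc}^G(v)=\mathrm{Anc}^G(v)\cap\mathrm{Desc}^G(v)$ is the strongly connected component of $v$. For $S\subseteq V$ and standard Borel spaces $\mathcal{E}_F$ ($F\in\tilde H$) write $\mathcal{E}_S=\prod_{F\in\tilde H,\,F\cap S\neq\emptyset}\mathcal{E}_F$, $\mathcal{E}_v=\prod_{F\in\tilde H,\,v\in F}\mathcal{E}_F$, and similarly $E_S,E_v$ for tuples of random variables; $\mathcal{X}_A=\prod_{v\in A}\mathcal{X}_v$. csSEP: there exist a probability space $(\Omega,\mathfrak{A},\mathbb{P})$,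 jointly independent random variables $E_F:\Omega\to\mathcal{E}_F$ ($F\in\tilde H$) with values in standard Borel spaces, measurable $f_v:\mathcal{X}_{\mathrm{Pa}^G(v)}\times\mathcal{E}_v\to\mathcal{X}_v$, random variables $X_v:\Omega\to\mathcal{X}_v$ with $X_v=f_v(X_{\mathrm{Pa}^G(v)},E_v)$ a.s. for all $v$ and joint law of $(X_v)_{v\in V}$ equal to $\mathbb{P}_V$, and measurable $\tilde g_v:\mathcal{X}_{\mathrm{Pa}^G(\mathrm{Sc}^G(v))\setminus\mathrm{Sc}^G(v)}\times\mathcal{E}_{\mathrm{Sc}^G(v)}\to\mathcal{X}_v$ with $X_v=\tilde g_v(X_{\mathrm{Pa}^G(\mathrm{Sc}^G(v))\setminus\mathrm{Sc}^G(v)},E_{\mathrm{Sc}^G(v)})$ a.s. for all $v\in V$. Acyclic augmentation $G^{\mathrm{acag}}$: the directed acyclic graph with node set $V^{\mathrm{aug}}=V\cup\{e_F:F\in\tilde H\}$ and edges: $v\to w$ for $v,w\in V$ iff $v\notin\mathrm{Sc}^G(w)$ and there is $w'\in\mathrm{Sc}^G(w)$ with $(v,w')\in E$; and $e_F\to w$ iff $\mathrm{Sc}^G(w)\cap F\neq\emptyset$. d-separation in a directed graph $D$: a path (sequence of nodes, repetitions allowed, consecutive nodes joined by an edge in either direction) is blocked by $Z$ if an endnode lies in $Z$, or some intermediate node is a collider ($\to v_i\leftarrow$) not in $\mathrm{Anc}^D(Z)$, or some intermediate non-collider lies in $Z$; $X\perp^d_D Y\mid Z$ if every path from $X$ to $Y$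 is blocked by $Z$. smgdGMP: there exist standard Borel spaces $\mathcal{E}_F$ ($F\in\tilde H$) and a probability distribution $\mathbb{P}_{V^{\mathrm{aug}}}$ on $\mathcal{X}_V\times\prod_{F\in\tilde H}\mathcal{E}_F$ (coordinate $e_F$ taking values in $\mathcal{E}_F$) whose marginal on $\mathcal{X}_V$ is $\mathbb{P}_V$, such that for all $X,Y,Z\subseteq V^{\mathrm{aug}}$: $X\perp^d_{G^{\mathrm{acag}}}Y\mid Z$ implies that the coordinate tuples indexed by $X$ and $Y$ are conditionally independent given those indexed by $Z$ under $\mathbb{P}_{V^{\mathrm{aug}}}$. *)

theory Defs
  imports "HOL-Analysis.Analysis" "HOL-Probability.Probability"
begin

definition polish_topology :: "'a topology \<Rightarrow> bool" where
  "polish_topology X \<longleftrightarrow> completely_metrizable_space X \<and> separable_space X"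

definition borel_of_topology :: "'a topology \<Rightarrow> 'a measure" where
  "borel_of_topology X = sigma (topspace X) {U. openin X U}"

definition standard_borel :: "'a measure \<Rightarrow> bool" where
  "standard_borel M \<longleftrightarrow>
     (\<exists>X. polish_topology X \<and> topspace X = space M \<and> sets M = sets (borel_of_topology X))"

definition simplicial_complex :: "'v set \<Rightarrow> 'v set set \<Rightarrow> bool" where
  "simplicial_complex V H \<longleftrightarrow>
     (\<forall>S\<in>H. S \<subseteq> V) \<and> (\<forall>v\<in>V. {v} \<in> H) \<and> (\<forall>S\<in>H. \<forall>T. T \<subseteq> S \<longrightarrow> T \<in> H)"

definition HEDG :: "'v set \<Rightarrow> ('v \<times> 'v) set \<Rightarrow> 'v set set \<Rightarrow> bool" where
  "HEDG V E H \<longleftrightarrow> finite V \<and> E \<subseteq> V \<times> V \<and> simplicial_complex V H"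

definition maxfaces :: "'v set set \<Rightarrow> 'v set set" where
  "maxfaces H = {F \<in> H. \<forall>F'\<in>H. F \<subseteq> F' \<longrightarrow> F' = F}"

definition parents :: "('v \<times> 'v) set \<Rightarrow> 'v \<Rightarrow> 'v set" where
  "parents E v = {u. (u, v) \<in> E}"

definition parents_set :: "('v \<times> 'v) set \<Rightarrow> 'v set \<Rightarrow> 'v set" where
  "parents_set E S = (\<Union>v\<in>S. parents E v)"

definition anc :: "('v \<times> 'v) set \<Rightarrow> 'v \<Rightarrow> 'v set" where
  "anc E v = {u. (u, v) \<in> E\<^sup>*}"

definition desc :: "('v \<times> 'v) set \<Rightarrow> 'v \<Rightarrow> 'v set" where
  "desc E v = {w. (v, w) \<in> E\<^sup>*}"

definition scc :: "('v \<times> 'v) set \<Rightarrow> 'v \<Rightarrow> 'v set" where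
  "scc E v = anc E v \<inter> desc E v"

text \<open>Maximal hyperedges meeting a set S (E_S is indexed by these; E_v by those meeting {v}).\<close>
definition faces_meeting :: "'v set set \<Rightarrow> 'v set \<Rightarrow> 'v set set" where
  "faces_meeting H S = {F \<in> maxfaces H. F \<inter> S \<noteq> {}}"

text \<open>Nodes of the augmentation: Inl v for v in V, Inr F standing for e_F.\<close>
definition aug_nodes :: "'v set \<Rightarrow> 'v set set \<Rightarrow> ('v + 'v set) set" where
  "aug_nodes V H = Inl ` V \<union> Inr ` maxfaces H"

definition acag :: "'v set \<Rightarrow> ('v \<times> 'v) set \<Rightarrow> 'v set set \<Rightarrow> (('v + 'v set) \<times> ('v + 'v set)) set" where
  "acag V E H =
     {(Inl v, Inl w) | v w. v \<in> V \<and> w \<in> V \<and> v \<notin> scc E w \<and> (\<exists>w'\<in>scc E w. (v, w') \<in> E)}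
   \<union> {(Inr F, Inl w) | F w. F \<in> maxfaces H \<and> w \<in> V \<and> scc E w \<inter> F \<noteq> {}}"

text \<open>A path: nonempty node sequence (repetitions allowed), consecutive nodes joined by an
  edge in either direction.\<close>
definition is_path :: "('n \<times> 'n) set \<Rightarrow> 'n list \<Rightarrow> bool" where
  "is_path D p \<longleftrightarrow> p \<noteq> [] \<and>
     (\<forall>i. Suc i < length p \<longrightarrow> (p ! i, p ! Suc i) \<in> D \<or> (p ! Suc i, p ! i) \<in> D)"

definition is_collider :: "('n \<times> 'n) set \<Rightarrow> 'n list \<Rightarrow> nat \<Rightarrow> bool" where
  "is_collider D p i \<longleftrightarrow> (p ! (i - 1), p ! i) \<in> D \<and> (p ! (i + 1), p ! i) \<in> D"

definition ancestors_of :: "('n \<times> 'n) set \<Rightarrow> 'n set \<Rightarrow> 'n set" where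
  "ancestors_of D Z = {u. \<exists>z\<in>Z. (u, z) \<in> D\<^sup>*}"

definition blocked :: "('n \<times> 'n) set \<Rightarrow> 'n set \<Rightarrow> 'n list \<Rightarrow> bool" where
  "blocked D Z p \<longleftrightarrow> hd p \<in> Z \<or> last p \<in> Z \<or>
     (\<exists>i. 0 < i \<and> i + 1 < length p \<and>
        ((is_collider D p i \<and> p ! i \<notin> ancestors_of D Z) \<or>
         (\<not> is_collider D p i \<and> p ! i \<in> Z)))"

definition d_separated :: "('n \<times> 'n) set \<Rightarrow> 'n set \<Rightarrow> 'n set \<Rightarrow> 'n set \<Rightarrow> bool" where
  "d_separated D X Y Z \<longleftrightarrow>
     (\<forall>p. is_path D p \<and> hd p \<in> X \<and> last p \<in> Y \<longrightarrow> blocked D Z p)"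

definition cond_indep :: "'a measure \<Rightarrow> 'a measure \<Rightarrow> 'a measure \<Rightarrow> 'a measure \<Rightarrow> bool" where
  "cond_indep Q A B C \<longleftrightarrow>
     (\<forall>a\<in>sets A. \<forall>b\<in>sets B. AE \<omega> in Q.
        real_cond_exp Q C (indicator (a \<inter> b)) \<omega> =
        real_cond_exp Q C (indicator a) \<omega> * real_cond_exp Q C (indicator b) \<omega>)"

definition aug_space :: "'v set \<Rightarrow> 'v set set \<Rightarrow> ('v \<Rightarrow> 'x measure) \<Rightarrow> ('v set \<Rightarrow> real measure)
    \<Rightarrow> (('v \<Rightarrow> 'x) \<times> ('v set \<Rightarrow> real)) measure" where
  "aug_space V H M N = (\<Pi>\<^sub>M v\<in>V. M v) \<Otimes>\<^sub>M (\<Pi>\<^sub>M F\<in>maxfaces H. N F)"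

definition coord_proj :: "('v + 'v set) set \<Rightarrow> ('v \<Rightarrow> 'x) \<times> ('v set \<Rightarrow> real)
    \<Rightarrow> ('v \<Rightarrow> 'x) \<times> ('v set \<Rightarrow> real)" where
  "coord_proj S \<omega> = (restrict (fst \<omega>) {v. Inl v \<in> S}, restrict (snd \<omega>) {F. Inr F \<in> S})"

definition coord_alg :: "('v \<Rightarrow> 'x measure) \<Rightarrow> ('v set \<Rightarrow> real measure)
    \<Rightarrow> (('v \<Rightarrow> 'x) \<times> ('v set \<Rightarrow> real)) measure \<Rightarrow> ('v + 'v set) set
    \<Rightarrow> (('v \<Rightarrow> 'x) \<times> ('v set \<Rightarrow> real)) measure" where
  "coord_alg M N Q S = vimage_algebra (space Q) (coord_proj S)
     ((\<Pi>\<^sub>M v\<in>{v. Inl v \<in> S}. M v) \<Otimes>\<^sub>M (\<Pi>\<^sub>M F\<in>{F. Inr F \<in> S}. N F))"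

text \<open>The probability space Omega lives on a type 'w which is a parameter; the noise spaces
  are standard Borel spaces with carriers in the reals (every standard Borel space is
  Borel isomorphic to such a space).\<close>
definition csSEP :: "'w itself \<Rightarrow> 'v set \<Rightarrow> ('v \<times> 'v) set \<Rightarrow> 'v set set \<Rightarrow> ('v \<Rightarrow> 'x measure)
    \<Rightarrow> ('v \<Rightarrow> 'x) measure \<Rightarrow> bool" where
  "csSEP (t::'w itself) V E H M P \<longleftrightarrow>
    (\<exists>(\<Omega>::'w measure) (N::'v set \<Rightarrow> real measure) (Ev::'v set \<Rightarrow> 'w \<Rightarrow> real) (Xr::'v \<Rightarrow> 'w \<Rightarrow> 'x)
       (f::'v \<Rightarrow> ('v \<Rightarrow> 'x) \<times> ('v set \<Rightarrow> real) \<Rightarrow> 'x)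
       (g::'v \<Rightarrow> ('v \<Rightarrow> 'x) \<times> ('v set \<Rightarrow> real) \<Rightarrow> 'x).
      prob_space \<Omega> \<and>
      (\<forall>F\<in>maxfaces H. standard_borel (N F)) \<and>
      prob_space.indep_vars \<Omega> N Ev (maxfaces H) \<and>
      (\<forall>v\<in>V. Xr v \<in> measurable \<Omega> (M v)) \<and>
      (\<forall>v\<in>V. f v \<in> measurable
          ((\<Pi>\<^sub>M u\<in>parents E v. M u) \<Otimes>\<^sub>M (\<Pi>\<^sub>M F\<in>faces_meeting H {v}. N F)) (M v)) \<and>
      (\<forall>v\<in>V. AE \<omega> in \<Omega>. Xr v \<omega> =
          f v (restrict (\<lambda>u. Xr u \<omega>) (parents E v), restrict (\<lambda>F. Ev F \<omega>) (faces_meeting H {v}))) \<and>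
      distr \<Omega> (\<Pi>\<^sub>M v\<in>V. M v) (\<lambda>\<omega>. restrict (\<lambda>v. Xr v \<omega>) V) = P \<and>
      (\<forall>v\<in>V. g v \<in> measurable
          ((\<Pi>\<^sub>M u\<in>parents_set E (scc E v) - scc E v. M u) \<Otimes>\<^sub>M
           (\<Pi>\<^sub>M F\<in>faces_meeting H (scc E v). N F)) (M v)) \<and>
      (\<forall>v\<in>V. AE \<omega> in \<Omega>. Xr v \<omega> =
          g v (restrict (\<lambda>u. Xr u \<omega>) (parents_set E (scc E v) - scc E v),
               restrict (\<lambda>F. Ev F \<omega>) (faces_meeting H (scc E v)))))"

definition smgdGMP :: "'v set \<Rightarrow> ('v \<times> 'v) set \<Rightarrow> 'v set set \<Rightarrow> ('v \<Rightarrow> 'x measure)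
    \<Rightarrow> ('v \<Rightarrow> 'x) measure \<Rightarrow> bool" where
  "smgdGMP V E H M P \<longleftrightarrow>
    (\<exists>(N::'v set \<Rightarrow> real measure) (Q::(('v \<Rightarrow> 'x) \<times> ('v set \<Rightarrow> real)) measure).
      (\<forall>F\<in>maxfaces H. standard_borel (N F)) \<and>
      prob_space Q \<and> sets Q = sets (aug_space V H M N) \<and>
      distr Q (\<Pi>\<^sub>M v\<in>V. M v) fst = P \<and>
      (\<forall>A B C. A \<subseteq> aug_nodes V H \<longrightarrow> B \<subseteq> aug_nodes V H \<longrightarrow> C \<subseteq> aug_nodes V H \<longrightarrow>
         d_separated (acag V E H) A B C \<longrightarrow>
         cond_indep Q (coord_alg M N Q A) (coord_alg M N Q B) (coord_alg M N Q C)))"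

end

theory Submission
  imports Defs
begin

lemma sfs: "prob_space M \<Longrightarrow> subalgebra M F \<Longrightarrow> sigma_finite_subalgebra M F"
proof -
  assume "prob_space M" "subalgebra M F"
  then interpret prob_space M by simp
  show ?thesis
    by (intro finite_measure_subalgebra_is_sigma_finite)
      (simp add: finite_measure_subalgebra_def finite_measure_subalgebra_axioms_def \<open>subalgebra M F\<close> finite_measure_axioms)
qed

lemma sub_sets: "subalgebra M F \<Longrightarrow> A \<in> sets F \<Longrightarrow> A \<in> sets M"
  by (auto simp: subalgebra_def)

lemma int_ind: "prob_space M \<Longrightarrow> A \<in> sets M \<Longrightarrow> integrable M (indicator A :: _ \<Rightarrow> real)"
proof -
  assume "prob_space M" "A \<in> sets M"
  then interpret prob_space M by simp
  show ?thesis using \<open>A \<in> sets M\<close> by (intro integrable_real_indicator) (auto simp: less_top[symmetric])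
qed

lemma set_integral_compl_real:
  fixes f :: "_ \<Rightarrow> real"
  assumes f: "integrable M f" and A: "A \<in> sets M"
  shows "(\<integral>x\<in>space M - A. f x \<partial>M) = integral\<^sup>L M f - (\<integral>x\<in>A. f x \<partial>M)"
proof -
  have "(\<integral>x\<in>space M - A. f x \<partial>M) = (\<integral>x. f x - indicator A x * f x \<partial>M)"
    unfolding set_lebesgue_integral_def by (rule Bochner_Integration.integral_cong) (auto simp: indicator_def)
  also have "\<dots> = integral\<^sup>L M f - (\<integral>x. indicator A x * f x \<partial>M)"
    by (rule Bochner_Integration.integral_diff[OF f]) (use integrable_mult_indicator[OF A f] in simp)
  finally show ?thesis by (simp add: set_lebesgue_integral_def)
qed

lemma ci_of_ce:
  assumes P: "prob_space M" and sF: "subalgebra M F" and sG: "subalgebra M G"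
    and sC: "subalgebra M C" and sFC: "subalgebra M FC"
    and FFC: "sets F \<subseteq> sets FC" and CFC: "sets C \<subseteq> sets FC"
    and h: "\<And>b. b \<in> sets G \<Longrightarrow> AE x in M. real_cond_exp M FC (indicator b) x = real_cond_exp M C (indicator b) x"
  shows "cond_indep M F G C"
proof -
  interpret prob_space M by fact
  interpret C: sigma_finite_subalgebra M C using sfs P sC .
  interpret FC: sigma_finite_subalgebra M FC using sfs P sFC .
  have CsubFC: "subalgebra FC C" using sC sFC CFC by (auto simp: subalgebra_def)
  show ?thesis unfolding cond_indep_def
  proof (intro ballI)
    fix a b assume a: "a \<in> sets F" and b: "b \<in> sets G"
    have aM: "a \<in> sets M" using a sF by (auto simp: subalgebra_def)
    have bM: "b \<in> sets M" using b sG by (auto simp: subalgebra_def)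
    have aFC: "a \<in> sets FC" using a FFC by auto
    define ia where "ia = (indicator a :: _ \<Rightarrow> real)"
    define ib where "ib = (indicator b :: _ \<Rightarrow> real)"
    have iaFC[measurable]: "ia \<in> borel_measurable FC" unfolding ia_def using aFC by simp
    have [measurable]: "ia \<in> borel_measurable M" "ib \<in> borel_measurable M"
      unfolding ia_def ib_def using aM bM by simp_all
    have intb: "integrable M ib" unfolding ib_def using int_ind[OF P bM] .
    have inta: "integrable M ia" unfolding ia_def using int_ind[OF P aM] .
    have intab: "integrable M (\<lambda>x. ia x * ib x)" unfolding ia_def
      using integrable_mult_indicator[OF aM intb] by simp
    have e1: "AE x in M. real_cond_exp M C (real_cond_exp M FC (\<lambda>x. ia x * ib x)) x = real_cond_exp M C (\<lambda>x. ia x * ib x) x"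
      by (rule C.real_cond_exp_nested_subalg[OF sFC CsubFC intab])
    have e2: "AE x in M. real_cond_exp M FC (\<lambda>x. ia x * ib x) x = ia x * real_cond_exp M FC ib x"
      by (rule FC.real_cond_exp_mult) (auto simp: intab)
    have e3: "AE x in M. real_cond_exp M FC ib x = real_cond_exp M C ib x"
      using h[OF b] unfolding ib_def .
    have e23: "AE x in M. real_cond_exp M FC (\<lambda>x. ia x * ib x) x = ia x * real_cond_exp M C ib x"
      using e2 e3 by auto
    have e4: "AE x in M. real_cond_exp M C (real_cond_exp M FC (\<lambda>x. ia x * ib x)) x = real_cond_exp M C (\<lambda>x. ia x * real_cond_exp M C ib x) x"
      by (rule C.real_cond_exp_cong[OF e23]) auto
    have eqf: "(\<lambda>x. ia x * real_cond_exp M C ib x) = (\<lambda>x. real_cond_exp M C ib x * ia x)"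
      by (simp add: mult.commute)
    have int5: "integrable M (\<lambda>x. real_cond_exp M C ib x * ia x)"
      using integrable_mult_indicator[OF aM C.real_cond_exp_int(1)[OF intb]] unfolding ia_def
      by (simp add: mult.commute)
    have e5: "AE x in M. real_cond_exp M C (\<lambda>x. real_cond_exp M C ib x * ia x) x = real_cond_exp M C ib x * real_cond_exp M C ia x"
      by (rule C.real_cond_exp_mult) (auto simp: int5)
    have iab: "indicator (a \<inter> b) = (\<lambda>x. ia x * ib x)"
      unfolding ia_def ib_def by (auto simp: indicator_def)
    show "AE x in M. real_cond_exp M C (indicator (a \<inter> b)) x =
        real_cond_exp M C (indicator a) x * real_cond_exp M C (indicator b) x"
      using e1 e4 e5 unfolding iab eqf by (auto simp: ia_def ib_def)
  qed
qed

lemma ce_of_ci: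
  assumes P: "prob_space M" and sF: "subalgebra M F" and sG: "subalgebra M G"
    and sC: "subalgebra M C" and sFC: "subalgebra M FC"
    and gen: "sets FC = sigma_sets (space M) {a \<inter> c | a c. a \<in> sets F \<and> c \<in> sets C}"
    and ci: "cond_indep M F G C" and b: "b \<in> sets G"
  shows "AE x in M. real_cond_exp M FC (indicator b) x = real_cond_exp M C (indicator b) x"
proof -
  interpret prob_space M by fact
  interpret C: sigma_finite_subalgebra M C using sfs P sC .
  interpret FC: sigma_finite_subalgebra M FC using sfs P sFC .
  let ?G0 = "{a \<inter> c | a c. a \<in> sets F \<and> c \<in> sets C}"
  let ?g = "real_cond_exp M C (indicator b)"
  have bM: "b \<in> sets M" using b sG by (auto simp: subalgebra_def)
  have intb: "integrable M (indicator b :: _ \<Rightarrow> real)" using int_ind[OF P bM] .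
  have intg: "integrable M ?g" using C.real_cond_exp_int(1)[OF intb] .
  have spF: "space F = space M" using sF by (simp add: subalgebra_def)
  have spC: "space C = space M" using sC by (simp add: subalgebra_def)
  have CFC: "sets C \<subseteq> sets FC"
  proof
    fix c assume c: "c \<in> sets C"
    have "space M \<inter> c \<in> ?G0" using c sets.top[of F] spF by blast
    moreover have "space M \<inter> c = c" using sets.sets_into_space[OF c] spC by auto
    ultimately show "c \<in> sets FC" unfolding gen by auto
  qed
  have gFC: "?g \<in> borel_measurable FC"
    using measurable_mono[of borel borel C FC] CFC sFC sC borel_measurable_cond_exp[of M C "indicator b"]
    by (auto simp: subalgebra_def)
  have GM: "sigma_sets (space M) ?G0 \<subseteq> sets M"
    using gen sFC by (auto simp: subalgebra_def)
  have Ist: "Int_stable ?G0"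
    unfolding Int_stable_def
  proof (intro ballI)
    fix x y assume "x \<in> ?G0" "y \<in> ?G0"
    then obtain a c a' c' where "x = a \<inter> c" "y = a' \<inter> c'" "a \<in> sets F" "c \<in> sets C" "a' \<in> sets F" "c' \<in> sets C"
      by blast
    then show "x \<inter> y \<in> ?G0"
      by (intro CollectI exI[of _ "a \<inter> a'"] exI[of _ "c \<inter> c'"]) auto
  qed
  have cl: "?G0 \<subseteq> Pow (space M)"
    using sets.sets_into_space spF by fastforce
  have key: "(\<integral>x\<in>A. indicator b x \<partial>M) = (\<integral>x\<in>A. ?g x \<partial>M)" if A: "A \<in> sigma_sets (space M) ?G0" for A
    using Ist cl A
  proof (induction rule: sigma_sets_induct_disjoint)
    case (basic A)
    then obtain a c where A: "A = a \<inter> c" and a: "a \<in> sets F" and c: "c \<in> sets C" by blast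
    have aM: "a \<in> sets M" using a sF by (auto simp: subalgebra_def)
    have cM: "c \<in> sets M" using c sC by (auto simp: subalgebra_def)
    have [measurable]: "(indicator c :: _ \<Rightarrow> real) \<in> borel_measurable C" using c by simp
    have [measurable]: "(indicator a :: _ \<Rightarrow> real) \<in> borel_measurable M" using aM by simp
    have [measurable]: "(indicator b :: _ \<Rightarrow> real) \<in> borel_measurable M" using bM by simp
    have abM: "a \<inter> b \<in> sets M" using aM bM by auto
    have [measurable]: "c \<in> sets M" using cM .
    have intab: "integrable M (indicator (a \<inter> b) :: _ \<Rightarrow> real)" using int_ind[OF P abM] .
    have "(\<integral>x\<in>A. indicator b x \<partial>M) = (\<integral>x. indicator c x * indicator (a \<inter> b) x \<partial>M :: real)"
      unfolding set_lebesgue_integral_def A by (intro Bochner_Integration.integral_cong) (auto simp: indicator_def)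
    also have "\<dots> = (\<integral>x. indicator c x * real_cond_exp M C (indicator (a \<inter> b)) x \<partial>M)"
      by (rule C.real_cond_exp_intg(2)[symmetric])
        (use integrable_mult_indicator[OF cM intab] abM in simp_all)
    also have "\<dots> = (\<integral>x. (indicator c x * ?g x) * real_cond_exp M C (indicator a) x \<partial>M)"
    proof (intro integral_cong_AE)
      have ae: "AE x in M. real_cond_exp M C (indicator (a \<inter> b)) x = real_cond_exp M C (indicator a) x * ?g x"
        using ci a b unfolding cond_indep_def by blast
      show "AE x in M. indicator c x * real_cond_exp M C (indicator (a \<inter> b)) x = indicator c x * ?g x * real_cond_exp M C (indicator a) x"
        using ae by eventually_elim (simp add: mult.commute)
    qed measurable
    also have "\<dots> = (\<integral>x. (indicator c x * ?g x) * indicator a x \<partial>M)"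
    proof (rule C.real_cond_exp_intg(2))
      have "integrable M (\<lambda>x. indicator a x * (indicator c x * ?g x))"
        using integrable_mult_indicator[OF aM integrable_mult_indicator[OF cM intg]] by simp
      then show "integrable M (\<lambda>x. indicator c x * ?g x * indicator a x)"
        by (simp add: mult.commute)
    qed auto
    also have "\<dots> = (\<integral>x\<in>A. ?g x \<partial>M)"
      unfolding set_lebesgue_integral_def A by (intro Bochner_Integration.integral_cong) (auto simp: indicator_def)
    finally show ?case .
  next
    case empty
    show ?case by (simp add: set_lebesgue_integral_def)
  next
    case (compl A)
    have AM: "A \<in> sets M" using compl(1) GM by auto
    show ?case
      using compl(2) by (simp add: set_integral_compl_real[OF intb AM] set_integral_compl_real[OF intg AM]
          C.real_cond_exp_int(2)[OF intb])
  next
    case (union A)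
    have AM: "\<And>i. A i \<in> sets M" using union(2) GM by auto
    have dj: "\<And>i j. i \<noteq> j \<Longrightarrow> A i \<inter> A j = {}" using union(1) by (auto simp: disjoint_family_on_def)
    have UM: "(\<Union>i. A i) \<in> sets M" using AM by auto
    have s1: "set_integrable M (\<Union>i. A i) (indicator b :: _ \<Rightarrow> real)"
      unfolding set_integrable_def using integrable_mult_indicator[OF UM intb] by simp
    have s2: "set_integrable M (\<Union>i. A i) ?g"
      unfolding set_integrable_def using integrable_mult_indicator[OF UM intg] by simp
    show ?case
      using union(3)
      by (simp add: lebesgue_integral_countable_add[OF AM dj s1] lebesgue_integral_countable_add[OF AM dj s2])
  qed
  show ?thesis
  proof (rule FC.real_cond_exp_charact)
    fix A assume "A \<in> sets FC"
    then show "(\<integral>x\<in>A. indicator b x \<partial>M) = (\<integral>x\<in>A. ?g x \<partial>M)"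
      using key gen by auto
  qed (auto simp: intb intg gFC)
qed

definition lset :: "('v + 'v set) set \<Rightarrow> 'v set" where "lset S = {v. Inl v \<in> S}"
definition rset :: "('v + 'v set) set \<Rightarrow> 'v set set" where "rset S = {F. Inr F \<in> S}"
definition pas :: "('v \<times> 'v) set \<Rightarrow> 'v \<Rightarrow> 'v set" where "pas E v = parents_set E (scc E v) - scc E v"
definition fm :: "('v \<times> 'v) set \<Rightarrow> 'v set set \<Rightarrow> 'v \<Rightarrow> 'v set set" where "fm E H v = faces_meeting H (scc E v)"

lemma cond_indep_sym: "cond_indep M F G C \<Longrightarrow> cond_indep M G F C"
  unfolding cond_indep_def
proof (intro ballI)
  fix a b assume h: "\<forall>a\<in>sets F. \<forall>b\<in>sets G. AE \<omega> in M. real_cond_exp M C (indicator (a \<inter> b)) \<omega> =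
        real_cond_exp M C (indicator a) \<omega> * real_cond_exp M C (indicator b) \<omega>"
    and a: "a \<in> sets G" and b: "b \<in> sets F"
  have "AE \<omega> in M. real_cond_exp M C (indicator (b \<inter> a)) \<omega> =
        real_cond_exp M C (indicator b) \<omega> * real_cond_exp M C (indicator a) \<omega>"
    using h a b by blast
  then show "AE \<omega> in M. real_cond_exp M C (indicator (a \<inter> b)) \<omega> =
        real_cond_exp M C (indicator a) \<omega> * real_cond_exp M C (indicator b) \<omega>"
    by (simp add: Int_commute mult.commute)
qed

lemma cond_indep_mono: "sets F' \<subseteq> sets F \<Longrightarrow> cond_indep M F G C \<Longrightarrow> cond_indep M F' G C"
  unfolding cond_indep_def by blast

lemma rce_cong_sets: "space F = space F' \<Longrightarrow> sets F = sets F' \<Longrightarrow> real_cond_exp M F f = real_cond_exp M F' f"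
  by (simp add: real_cond_exp_def nn_cond_exp_def restr_to_subalg_def subalgebra_def)

locale sem =
  fixes Om :: "'w measure" and V :: "'v set" and E :: "('v \<times> 'v) set" and H :: "'v set set"
    and M :: "'v \<Rightarrow> 'x measure" and NN :: "'v set \<Rightarrow> real measure"
    and Ev :: "'v set \<Rightarrow> 'w \<Rightarrow> real" and Y :: "'w \<Rightarrow> 'v \<Rightarrow> 'x"
    and g :: "'v \<Rightarrow> ('v \<Rightarrow> 'x) \<times> ('v set \<Rightarrow> real) \<Rightarrow> 'x"
  assumes P: "prob_space Om"
    and hedg: "HEDG V E H"
    and ind: "prob_space.indep_vars Om NN Ev (maxfaces H)"
    and gmeas: "\<And>v. v \<in> V \<Longrightarrow> g v \<in> measurable (PiM (pas E v) M \<Otimes>\<^sub>M PiM (fm E H v) NN) (M v)"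
    and Yeq: "\<And>v \<omega>. v \<in> V \<Longrightarrow> \<omega> \<in> space Om \<Longrightarrow>
        Y \<omega> v = g v (restrict (Y \<omega>) (pas E v), restrict (\<lambda>F. Ev F \<omega>) (fm E H v))"
begin

interpretation prob_space Om by (rule P)

abbreviation "D \<equiv> acag V E H"
abbreviation "nodes \<equiv> aug_nodes V H"

definition sigA :: "('v + 'v set) set \<Rightarrow> 'w measure" where
  "sigA S = vimage_algebra (space Om) (\<lambda>\<omega>. (restrict (Y \<omega>) (lset S), restrict (\<lambda>F. Ev F \<omega>) (rset S)))
      (PiM (lset S) M \<Otimes>\<^sub>M PiM (rset S) NN)"

definition ci where "ci S T U = cond_indep Om (sigA S) (sigA T) (sigA U)"

definition anc_closed where "anc_closed S \<longleftrightarrow> (\<forall>x\<in>S. \<forall>p. (p, x) \<in> D \<longrightarrow> p \<in> S)"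

definition rk :: "'v + 'v set \<Rightarrow> nat" where
  "rk x = (case x of Inl v \<Rightarrow> card {u\<in>V. (u, v) \<in> E\<^sup>*} | Inr F \<Rightarrow> 0)"

lemma finV: "finite V" and EV: "E \<subseteq> V \<times> V"
  using hedg by (auto simp: HEDG_def)

lemma Evmeas: "F \<in> maxfaces H \<Longrightarrow> Ev F \<in> measurable Om (NN F)"
  using ind by (auto simp: indep_vars_def)

lemma pas_V: "pas E v \<subseteq> V"
  using EV by (auto simp: pas_def parents_set_def parents_def)

lemma fm_max: "fm E H v \<subseteq> maxfaces H"
  by (auto simp: fm_def faces_meeting_def)

lemma par_l: "v \<in> V \<Longrightarrow> u \<in> pas E v \<Longrightarrow> (Inl u, Inl v) \<in> D"
proof -
  assume v: "v \<in> V" and u: "u \<in> pas E v"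
  have uV: "u \<in> V" using u pas_V by blast
  obtain w' where "w' \<in> scc E v" "(u, w') \<in> E" "u \<notin> scc E v"
    using u by (auto simp: pas_def parents_set_def parents_def)
  then show ?thesis unfolding acag_def using v uV by blast
qed

lemma par_r: "v \<in> V \<Longrightarrow> F \<in> fm E H v \<Longrightarrow> (Inr F, Inl v) \<in> D"
proof -
  assume v: "v \<in> V" and F: "F \<in> fm E H v"
  have "F \<in> maxfaces H" "scc E v \<inter> F \<noteq> {}" using F by (auto simp: fm_def faces_meeting_def)
  then show ?thesis unfolding acag_def using v by blast
qed

lemma par_inv: "(p, x) \<in> D \<Longrightarrow> \<exists>v\<in>V. x = Inl v \<and> ((\<exists>u. p = Inl u \<and> u \<in> pas E v) \<or> (\<exists>F. p = Inr F \<and> F \<in> fm E H v))"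
proof -
  assume "(p, x) \<in> D"
  then consider (l) v w where "p = Inl v" "x = Inl w" "v \<in> V" "w \<in> V" "v \<notin> scc E w" "\<exists>w'\<in>scc E w. (v, w') \<in> E"
    | (r) F w where "p = Inr F" "x = Inl w" "F \<in> maxfaces H" "w \<in> V" "scc E w \<inter> F \<noteq> {}"
    unfolding acag_def by blast
  then show ?thesis
  proof cases
    case l
    then have "v \<in> pas E w" by (auto simp: pas_def parents_set_def parents_def)
    then show ?thesis using l by blast
  next
    case r
    then have "F \<in> fm E H w" by (auto simp: fm_def faces_meeting_def)
    then show ?thesis using r by blast
  qed
qed

lemma rk_edge: assumes "(p, x) \<in> D" shows "rk p < rk x"
proof -
  obtain v where v: "v \<in> V" "x = Inl v" and cases: "(\<exists>u. p = Inl u \<and> u \<in> pas E v) \<or> (\<exists>F. p = Inr F \<and> F \<in> fm E H v)"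
    using par_inv[OF assms] by blast
  have fin: "finite {u\<in>V. (u, v) \<in> E\<^sup>*}" using finV by auto
  show ?thesis
  proof (cases "\<exists>F. p = Inr F")
    case True
    have "v \<in> {u\<in>V. (u, v) \<in> E\<^sup>*}" using v by auto
    then have "card {u\<in>V. (u, v) \<in> E\<^sup>*} > 0" using fin by (auto simp: card_gt_0_iff)
    then show ?thesis using True v by (auto simp: rk_def)
  next
    case False
    then obtain u where u: "p = Inl u" "u \<in> pas E v" using cases by blast
    then obtain w' where w': "w' \<in> scc E v" "(u, w') \<in> E" "u \<notin> scc E v"
      by (auto simp: pas_def parents_set_def parents_def)
    have "(w', v) \<in> E\<^sup>*" using w' by (auto simp: scc_def anc_def)
    then have uv: "(u, v) \<in> E\<^sup>*" using w' by (meson converse_rtrancl_into_rtrancl)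
    have vu: "(v, u) \<notin> E\<^sup>*" using w' uv by (auto simp: scc_def anc_def desc_def)
    have "{x\<in>V. (x, u) \<in> E\<^sup>*} \<subset> {x\<in>V. (x, v) \<in> E\<^sup>*}"
      using uv vu v by (auto intro: rtrancl_trans)
    then have "card {x\<in>V. (x, u) \<in> E\<^sup>*} < card {x\<in>V. (x, v) \<in> E\<^sup>*}"
      using fin by (intro psubset_card_mono) auto
    then show ?thesis using u v by (simp add: rk_def)
  qed
qed

lemma Y_step:
  assumes N: "space N = space Om" and v: "v \<in> V"
    and hu: "\<And>u. u \<in> pas E v \<Longrightarrow> (\<lambda>\<omega>. Y \<omega> u) \<in> measurable N (M u)"
    and hF: "\<And>F. F \<in> fm E H v \<Longrightarrow> Ev F \<in> measurable N (NN F)"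
  shows "(\<lambda>\<omega>. Y \<omega> v) \<in> measurable N (M v)"
proof -
  have "(\<lambda>\<omega>. g v (restrict (Y \<omega>) (pas E v), restrict (\<lambda>F. Ev F \<omega>) (fm E H v))) \<in> measurable N (M v)"
  proof (rule measurable_compose[OF _ gmeas[OF v]])
    show "(\<lambda>\<omega>. (restrict (Y \<omega>) (pas E v), restrict (\<lambda>F. Ev F \<omega>) (fm E H v))) \<in> measurable N (PiM (pas E v) M \<Otimes>\<^sub>M PiM (fm E H v) NN)"
      by (intro measurable_Pair measurable_restrict hu hF)
  qed
  then show ?thesis
    by (rule measurable_cong[THEN iffD1, rotated]) (use N Yeq v in auto)
qed

lemma Y_meas_anc:
  assumes N: "space N = space Om" and S: "anc_closed S"
    and hF: "\<And>F. Inr F \<in> S \<Longrightarrow> Ev F \<in> measurable N (NN F)"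
  shows "Inl v \<in> S \<Longrightarrow> v \<in> V \<Longrightarrow> (\<lambda>\<omega>. Y \<omega> v) \<in> measurable N (M v)"
proof (induction "rk (Inl v)" arbitrary: v rule: less_induct)
  case less
  show ?case
  proof (rule Y_step[OF N less(3)])
    fix u assume u: "u \<in> pas E v"
    have e: "(Inl u, Inl v) \<in> D" using par_l[OF less(3) u] .
    show "(\<lambda>\<omega>. Y \<omega> u) \<in> measurable N (M u)"
      using less(1)[OF rk_edge[OF e]] e S less(2) pas_V u unfolding anc_closed_def by blast
  next
    fix F assume F: "F \<in> fm E H v"
    show "Ev F \<in> measurable N (NN F)"
      using par_r[OF less(3) F] S less(2) hF unfolding anc_closed_def by blast
  qed
qed

lemma anc_closed_nodes: "anc_closed nodes"
  unfolding anc_closed_def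
proof (intro ballI allI impI)
  fix x p assume "(p, x) \<in> D"
  then obtain v where "v \<in> V" "(\<exists>u. p = Inl u \<and> u \<in> pas E v) \<or> (\<exists>F. p = Inr F \<and> F \<in> fm E H v)"
    using par_inv by blast
  then show "p \<in> nodes" using pas_V fm_max unfolding aug_nodes_def by blast
qed

lemma Ymeas: "v \<in> V \<Longrightarrow> (\<lambda>\<omega>. Y \<omega> v) \<in> measurable Om (M v)"
  by (rule Y_meas_anc[OF refl anc_closed_nodes]) (auto simp: aug_nodes_def Evmeas)

lemma Yspace: "\<omega> \<in> space Om \<Longrightarrow> v \<in> V \<Longrightarrow> Y \<omega> v \<in> space (M v)"
  using Ymeas measurable_space by fast

lemma Evspace: "\<omega> \<in> space Om \<Longrightarrow> F \<in> maxfaces H \<Longrightarrow> Ev F \<omega> \<in> space (NN F)"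
  using Evmeas measurable_space by fast

lemma lset_nodes: "S \<subseteq> nodes \<Longrightarrow> lset S \<subseteq> V" and rset_nodes: "S \<subseteq> nodes \<Longrightarrow> rset S \<subseteq> maxfaces H"
  by (auto simp: lset_def rset_def aug_nodes_def)

lemma map_space:
  assumes "S \<subseteq> nodes"
  shows "(\<lambda>\<omega>. (restrict (Y \<omega>) (lset S), restrict (\<lambda>F. Ev F \<omega>) (rset S))) \<in> space Om \<rightarrow> space (PiM (lset S) M \<Otimes>\<^sub>M PiM (rset S) NN)"
proof
  fix \<omega> assume w: "\<omega> \<in> space Om"
  have "restrict (Y \<omega>) (lset S) \<in> space (PiM (lset S) M)"
    unfolding space_PiM using lset_nodes[OF assms] Yspace[OF w] by (auto simp: restrict_PiE_iff)
  moreover have "restrict (\<lambda>F. Ev F \<omega>) (rset S) \<in> space (PiM (rset S) NN)"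
    unfolding space_PiM using rset_nodes[OF assms] Evspace[OF w] by (auto simp: restrict_PiE_iff)
  ultimately show "(restrict (Y \<omega>) (lset S), restrict (\<lambda>F. Ev F \<omega>) (rset S)) \<in> space (PiM (lset S) M \<Otimes>\<^sub>M PiM (rset S) NN)"
    by (simp add: space_pair_measure)
qed

lemma space_sigA[simp]: "space (sigA S) = space Om"
  by (simp add: sigA_def)

lemma sigA_meas:
  assumes S: "S \<subseteq> nodes"
  shows "(\<lambda>\<omega>. (restrict (Y \<omega>) (lset S), restrict (\<lambda>F. Ev F \<omega>) (rset S))) \<in> measurable (sigA S) (PiM (lset S) M \<Otimes>\<^sub>M PiM (rset S) NN)"
  unfolding sigA_def by (rule measurable_vimage_algebra1[OF map_space[OF S]])

lemma MC1:
  assumes S: "S \<subseteq> nodes" and N: "space N = space Om" and sub: "sets (sigA S) \<subseteq> sets N"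
  shows "v \<in> lset S \<Longrightarrow> (\<lambda>\<omega>. Y \<omega> v) \<in> measurable N (M v)"
    and "F \<in> rset S \<Longrightarrow> Ev F \<in> measurable N (NN F)"
proof -
  let ?f = "\<lambda>\<omega>. (restrict (Y \<omega>) (lset S), restrict (\<lambda>F. Ev F \<omega>) (rset S))"
  have mm: "measurable (sigA S) (PiM (lset S) M \<Otimes>\<^sub>M PiM (rset S) NN) \<subseteq> measurable N (PiM (lset S) M \<Otimes>\<^sub>M PiM (rset S) NN)"
    by (rule measurable_mono) (auto simp: sub N)
  have f: "?f \<in> measurable N (PiM (lset S) M \<Otimes>\<^sub>M PiM (rset S) NN)"
    using sigA_meas[OF S] mm by blast
  show "(\<lambda>\<omega>. Y \<omega> v) \<in> measurable N (M v)" if v: "v \<in> lset S"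
  proof -
    have "(\<lambda>\<omega>. fst (?f \<omega>) v) \<in> measurable N (M v)"
      by (rule measurable_compose[OF measurable_compose[OF f measurable_fst] measurable_component_singleton[OF v]])
    then show ?thesis using v by simp
  qed
  show "Ev F \<in> measurable N (NN F)" if F: "F \<in> rset S"
  proof -
    have "(\<lambda>\<omega>. snd (?f \<omega>) F) \<in> measurable N (NN F)"
      by (rule measurable_compose[OF measurable_compose[OF f measurable_snd] measurable_component_singleton[OF F]])
    then show ?thesis using F by simp
  qed
qed

lemma MC2:
  assumes S: "S \<subseteq> nodes" and N: "space N = space Om"
    and hY: "\<And>v. v \<in> lset S \<Longrightarrow> (\<lambda>\<omega>. Y \<omega> v) \<in> measurable N (M v)"
    and hE: "\<And>F. F \<in> rset S \<Longrightarrow> Ev F \<in> measurable N (NN F)"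
  shows "sets (sigA S) \<subseteq> sets N"
proof
  let ?f = "\<lambda>\<omega>. (restrict (Y \<omega>) (lset S), restrict (\<lambda>F. Ev F \<omega>) (rset S))"
  have f: "?f \<in> measurable N (PiM (lset S) M \<Otimes>\<^sub>M PiM (rset S) NN)"
    by (intro measurable_Pair measurable_restrict hY hE)
  fix A assume "A \<in> sets (sigA S)"
  then have "A \<in> {?f -` B \<inter> space Om | B. B \<in> sets (PiM (lset S) M \<Otimes>\<^sub>M PiM (rset S) NN)}"
    unfolding sigA_def sets_vimage_algebra2[OF map_space[OF S]] .
  then obtain B where B: "B \<in> sets (PiM (lset S) M \<Otimes>\<^sub>M PiM (rset S) NN)" "A = ?f -` B \<inter> space Om"
    by blast
  show "A \<in> sets N" using measurable_sets[OF f B(1)] B(2) N by simp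
qed

end

sublocale sem \<subseteq> prob_space Om by (rule P)

context sem begin

lemma sigA_sub: assumes S: "S \<subseteq> nodes" shows "subalgebra Om (sigA S)"
  unfolding subalgebra_def
proof
  show "sets (sigA S) \<subseteq> sets Om"
    by (rule MC2[OF S refl]) (use lset_nodes[OF S] rset_nodes[OF S] in \<open>auto intro: Ymeas Evmeas\<close>)
qed simp

lemma sigA_mono: "S \<subseteq> T \<Longrightarrow> T \<subseteq> nodes \<Longrightarrow> sets (sigA S) \<subseteq> sets (sigA T)"
proof -
  assume ST: "S \<subseteq> T" and T: "T \<subseteq> nodes"
  show ?thesis
  proof (rule MC2)
    show "S \<subseteq> nodes" using ST T by auto
    fix v assume "v \<in> lset S"
    then have "v \<in> lset T" using ST by (auto simp: lset_def)
    then show "(\<lambda>\<omega>. Y \<omega> v) \<in> measurable (sigA T) (M v)" by (rule MC1(1)[OF T space_sigA order_refl])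
  next
    fix F assume "F \<in> rset S"
    then have "F \<in> rset T" using ST by (auto simp: rset_def)
    then show "Ev F \<in> measurable (sigA T) (NN F)" by (rule MC1(2)[OF T space_sigA order_refl])
  qed simp
qed

lemma sigA_union_le:
  assumes S: "S \<subseteq> nodes" and U: "U \<subseteq> nodes" and N: "space N = space Om"
    and hS: "sets (sigA S) \<subseteq> sets N" and hU: "sets (sigA U) \<subseteq> sets N"
  shows "sets (sigA (S \<union> U)) \<subseteq> sets N"
proof (rule MC2)
  show "S \<union> U \<subseteq> nodes" using S U by auto
  fix v assume "v \<in> lset (S \<union> U)"
  then have "v \<in> lset S \<or> v \<in> lset U" by (auto simp: lset_def)
  then show "(\<lambda>\<omega>. Y \<omega> v) \<in> measurable N (M v)"
    using MC1(1)[OF S N hS] MC1(1)[OF U N hU] by blast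
next
  fix F assume "F \<in> rset (S \<union> U)"
  then have "F \<in> rset S \<or> F \<in> rset U" by (auto simp: rset_def)
  then show "Ev F \<in> measurable N (NN F)"
    using MC1(2)[OF S N hS] MC1(2)[OF U N hU] by blast
qed (rule N)

lemma join_gen:
  assumes S: "S \<subseteq> nodes" and U: "U \<subseteq> nodes"
  shows "sets (sigA (S \<union> U)) = sigma_sets (space Om) {a \<inter> c | a c. a \<in> sets (sigA S) \<and> c \<in> sets (sigA U)}"
    (is "_ = sigma_sets _ ?G0")
proof
  have G0: "?G0 \<subseteq> Pow (space Om)"
    using sets.sets_into_space[of _ "sigA S"] by fastforce
  have sp: "space (sigma (space Om) ?G0) = space Om" by (simp add: space_measure_of_conv)
  have st: "sets (sigma (space Om) ?G0) = sigma_sets (space Om) ?G0" using G0 by (rule sets_measure_of)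
  have hS: "sets (sigA S) \<subseteq> sets (sigma (space Om) ?G0)"
  proof
    fix a assume a: "a \<in> sets (sigA S)"
    have "space Om \<in> sets (sigA U)" using sets.top[of "sigA U"] by simp
    moreover have "a \<inter> space Om = a" using sets.sets_into_space[OF a] by auto
    ultimately have "a \<in> ?G0" using a by blast
    then show "a \<in> sets (sigma (space Om) ?G0)" unfolding st by blast
  qed
  have hU: "sets (sigA U) \<subseteq> sets (sigma (space Om) ?G0)"
  proof
    fix c assume c: "c \<in> sets (sigA U)"
    have "space Om \<in> sets (sigA S)" using sets.top[of "sigA S"] by simp
    moreover have "space Om \<inter> c = c" using sets.sets_into_space[OF c] by auto
    ultimately have "c \<in> ?G0" using c by blast
    then show "c \<in> sets (sigma (space Om) ?G0)" unfolding st by blast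
  qed
  show "sets (sigA (S \<union> U)) \<subseteq> sigma_sets (space Om) ?G0"
    using sigA_union_le[OF S U sp hS hU] st by simp
next
  have "?G0 \<subseteq> sets (sigA (S \<union> U))"
    using sigA_mono[of S "S \<union> U"] sigA_mono[of U "S \<union> U"] S U by blast
  then show "sigma_sets (space Om) ?G0 \<subseteq> sets (sigA (S \<union> U))"
    using sets.sigma_sets_subset[of ?G0 "sigA (S \<union> U)"] by simp
qed

definition ce where
  "ce S T U \<longleftrightarrow> (\<forall>b\<in>sets (sigA T). AE \<omega> in Om.
     real_cond_exp Om (sigA (S \<union> U)) (indicator b) \<omega> = real_cond_exp Om (sigA U) (indicator b) \<omega>)"

lemma ci_iff:
  assumes S: "S \<subseteq> nodes" and T: "T \<subseteq> nodes" and U: "U \<subseteq> nodes"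
  shows "ci S T U \<longleftrightarrow> ce S T U"
proof
  assume "ci S T U"
  then show "ce S T U" unfolding ce_def ci_def
    using ce_of_ci[OF P sigA_sub[OF S] sigA_sub[OF T] sigA_sub[OF U] sigA_sub join_gen[OF S U]] S U by blast
next
  assume "ce S T U"
  then show "ci S T U" unfolding ce_def ci_def
    using ci_of_ce[OF P sigA_sub[OF S] sigA_sub[OF T] sigA_sub[OF U] sigA_sub[of "S \<union> U"]
        sigA_mono[of S "S \<union> U"] sigA_mono[of U "S \<union> U"]] S U by blast
qed

lemma ci_sym: "ci S T U \<Longrightarrow> ci T S U"
  unfolding ci_def by (rule cond_indep_sym)

lemma ci_mono: "S' \<subseteq> S \<Longrightarrow> S \<subseteq> nodes \<Longrightarrow> ci S T U \<Longrightarrow> ci S' T U"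
  unfolding ci_def using sigA_mono by (blast intro: cond_indep_mono)

lemma ci_det:
  assumes S: "S \<subseteq> nodes" and S1: "S1 \<subseteq> nodes" and T: "T \<subseteq> nodes" and U: "U \<subseteq> nodes"
    and sub: "sets (sigA S1) \<subseteq> sets (sigA (S \<union> U))" and h: "ci S T U"
  shows "ci (S \<union> S1) T U"
proof -
  have eqs: "sets (sigA ((S \<union> S1) \<union> U)) = sets (sigA (S \<union> U))"
  proof
    have "(S \<union> S1) \<union> U = (S \<union> U) \<union> S1" by auto
    then show "sets (sigA ((S \<union> S1) \<union> U)) \<subseteq> sets (sigA (S \<union> U))"
      using sigA_union_le[of "S \<union> U" S1 "sigA (S \<union> U)"] S S1 U sub by auto
    show "sets (sigA (S \<union> U)) \<subseteq> sets (sigA ((S \<union> S1) \<union> U))"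
      using sigA_mono[of "S \<union> U" "(S \<union> S1) \<union> U"] S S1 U by auto
  qed
  have "real_cond_exp Om (sigA ((S \<union> S1) \<union> U)) = real_cond_exp Om (sigA (S \<union> U))"
    by (intro ext rce_cong_sets) (simp_all add: eqs)
  then have "ce (S \<union> S1) T U" using h ci_iff[OF S T U] unfolding ce_def by simp
  then show ?thesis using ci_iff S S1 T U by auto
qed

lemma ci_contr:
  assumes S: "S \<subseteq> nodes" and S1: "S1 \<subseteq> nodes" and T: "T \<subseteq> nodes" and U: "U \<subseteq> nodes"
    and h1: "ci S T U" and h2: "ci S1 T (U \<union> S)"
  shows "ci (S \<union> S1) T U"
proof -
  have c1: "ce S T U" using h1 ci_iff S T U by auto
  have c2: "ce S1 T (U \<union> S)" using h2 ci_iff S S1 T U by auto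
  have e1: "S1 \<union> (U \<union> S) = (S \<union> S1) \<union> U" by auto
  have e2: "U \<union> S = S \<union> U" by auto
  have "ce (S \<union> S1) T U"
    unfolding ce_def
  proof
    fix b assume b: "b \<in> sets (sigA T)"
    have "AE \<omega> in Om. real_cond_exp Om (sigA ((S \<union> S1) \<union> U)) (indicator b) \<omega> = real_cond_exp Om (sigA (U \<union> S)) (indicator b) \<omega>"
      using c2 b unfolding ce_def e1 by blast
    then have "AE \<omega> in Om. real_cond_exp Om (sigA ((S \<union> S1) \<union> U)) (indicator b) \<omega> = real_cond_exp Om (sigA (S \<union> U)) (indicator b) \<omega>"
      by (simp only: e2)
    moreover have "AE \<omega> in Om. real_cond_exp Om (sigA (S \<union> U)) (indicator b) \<omega> = real_cond_exp Om (sigA U) (indicator b) \<omega>"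
      using c1 b unfolding ce_def by blast
    ultimately show "AE \<omega> in Om. real_cond_exp Om (sigA ((S \<union> S1) \<union> U)) (indicator b) \<omega> = real_cond_exp Om (sigA U) (indicator b) \<omega>"
      by eventually_elim simp
  qed
  then show ?thesis using ci_iff S S1 T U by auto
qed

lemma ci_wu:
  assumes S: "S \<subseteq> nodes" and S1: "S1 \<subseteq> nodes" and T: "T \<subseteq> nodes" and U: "U \<subseteq> nodes"
    and h: "ci (S \<union> S1) T U"
  shows "ci S T (U \<union> S1)"
proof -
  have c: "ce (S \<union> S1) T U" using h ci_iff S S1 T U by auto
  have e1: "(S \<union> S1) \<union> U = S \<union> (U \<union> S1)" by auto
  let ?W = "S \<union> (U \<union> S1)"
  have W: "?W \<subseteq> nodes" using S S1 U by auto
  have US1: "U \<union> S1 \<subseteq> nodes" using S1 U by auto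
  interpret U1: sigma_finite_subalgebra Om "sigA (U \<union> S1)" using sfs[OF P sigA_sub[OF US1]] .
  interpret U0: sigma_finite_subalgebra Om "sigA U" using sfs[OF P sigA_sub[OF U]] .
  have "ce S T (U \<union> S1)"
    unfolding ce_def
  proof
    fix b assume b: "b \<in> sets (sigA T)"
    have bM: "b \<in> sets Om" using b sigA_sub[OF T] by (auto simp: subalgebra_def)
    have intb: "integrable Om (indicator b :: _ \<Rightarrow> real)" using int_ind[OF P bM] .
    have a1: "AE \<omega> in Om. real_cond_exp Om (sigA ?W) (indicator b) \<omega> = real_cond_exp Om (sigA U) (indicator b) \<omega>"
      using c b unfolding ce_def e1 by blast
    have sub1: "subalgebra (sigA ?W) (sigA (U \<union> S1))"
      using sigA_mono[of "U \<union> S1" ?W] W by (auto simp: subalgebra_def)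
    have a2: "AE \<omega> in Om. real_cond_exp Om (sigA (U \<union> S1)) (real_cond_exp Om (sigA ?W) (indicator b)) \<omega> = real_cond_exp Om (sigA (U \<union> S1)) (indicator b) \<omega>"
      by (rule U1.real_cond_exp_nested_subalg[OF sigA_sub[OF W] sub1 intb])
    have a3: "AE \<omega> in Om. real_cond_exp Om (sigA (U \<union> S1)) (real_cond_exp Om (sigA ?W) (indicator b)) \<omega> = real_cond_exp Om (sigA (U \<union> S1)) (real_cond_exp Om (sigA U) (indicator b)) \<omega>"
      by (rule U1.real_cond_exp_cong[OF a1]) auto
    have mU: "real_cond_exp Om (sigA U) (indicator b) \<in> borel_measurable (sigA (U \<union> S1))"
      using measurable_mono[of borel borel "sigA U" "sigA (U \<union> S1)"] sigA_mono[of U "U \<union> S1"] US1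
        borel_measurable_cond_exp[of Om "sigA U" "indicator b"] by auto
    have a4: "AE \<omega> in Om. real_cond_exp Om (sigA (U \<union> S1)) (real_cond_exp Om (sigA U) (indicator b)) \<omega> = real_cond_exp Om (sigA U) (indicator b) \<omega>"
      by (rule U1.real_cond_exp_F_meas[OF U0.real_cond_exp_int(1)[OF intb] mU])
    show "AE \<omega> in Om. real_cond_exp Om (sigA ?W) (indicator b) \<omega> = real_cond_exp Om (sigA (U \<union> S1)) (indicator b) \<omega>"
      using a1 a2 a3 a4 by eventually_elim simp
  qed
  then show ?thesis using ci_iff S S1 T U by auto
qed

lemma rce_indep:
  assumes X: "X \<subseteq> W" and W: "W \<subseteq> nodes" and T: "T \<subseteq> nodes" and b: "b \<in> sets (sigA T)"
    and indep: "\<And>d. d \<in> sets (sigA W) \<Longrightarrow> prob (b \<inter> d) = prob b * prob d"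
  shows "AE \<omega> in Om. real_cond_exp Om (sigA X) (indicator b) \<omega> = prob b"
proof -
  have Xn: "X \<subseteq> nodes" using X W by auto
  interpret X: sigma_finite_subalgebra Om "sigA X" using sfs[OF P sigA_sub[OF Xn]] .
  have bM: "b \<in> sets Om" using b sigA_sub[OF T] by (auto simp: subalgebra_def)
  have intb: "integrable Om (indicator b :: _ \<Rightarrow> real)" using int_ind[OF P bM] .
  show ?thesis
  proof (rule X.real_cond_exp_charact)
    fix A assume A: "A \<in> sets (sigA X)"
    have AW: "A \<in> sets (sigA W)" using A sigA_mono[OF X W] by auto
    have AM: "A \<in> sets Om" using A sigA_sub[OF Xn] by (auto simp: subalgebra_def)
    have "(\<integral>x\<in>A. indicator b x \<partial>Om) = (\<integral>x. indicator (b \<inter> A) x \<partial>Om)"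
      unfolding set_lebesgue_integral_def by (rule Bochner_Integration.integral_cong) (auto simp: indicator_def)
    also have "\<dots> = prob (b \<inter> A)" using AM bM by simp
    also have "\<dots> = prob b * prob A" using indep[OF AW] .
    also have "\<dots> = (\<integral>x. indicator A x * prob b \<partial>Om)" using AM by simp
    also have "\<dots> = (\<integral>x\<in>A. prob b \<partial>Om)"
      unfolding set_lebesgue_integral_def by (rule Bochner_Integration.integral_cong) (auto simp: indicator_def)
    finally show "(\<integral>x\<in>A. indicator b x \<partial>Om) = (\<integral>x\<in>A. prob b \<partial>Om)" .
  qed (auto simp: intb)
qed

lemma ci_indep:
  assumes S: "S \<subseteq> nodes" and T: "T \<subseteq> nodes" and U: "U \<subseteq> nodes" and W: "W \<subseteq> nodes"
    and SUW: "S \<union> U \<subseteq> W"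
    and indep: "\<And>b d. b \<in> sets (sigA T) \<Longrightarrow> d \<in> sets (sigA W) \<Longrightarrow> prob (b \<inter> d) = prob b * prob d"
  shows "ci S T U"
proof -
  have "ce S T U"
    unfolding ce_def
  proof
    fix b assume b: "b \<in> sets (sigA T)"
    have "AE \<omega> in Om. real_cond_exp Om (sigA (S \<union> U)) (indicator b) \<omega> = prob b"
      by (rule rce_indep[OF SUW W T b indep[OF b]])
    moreover have "AE \<omega> in Om. real_cond_exp Om (sigA U) (indicator b) \<omega> = prob b"
      using SUW by (intro rce_indep[OF _ W T b indep[OF b]]) auto
    ultimately show "AE \<omega> in Om. real_cond_exp Om (sigA (S \<union> U)) (indicator b) \<omega> = real_cond_exp Om (sigA U) (indicator b) \<omega>"
      by eventually_elim simp
  qed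
  then show ?thesis using ci_iff S T U by auto
qed

end

context sem begin

lemma ci_empty: "T \<subseteq> nodes \<Longrightarrow> U \<subseteq> nodes \<Longrightarrow> ci {} T U"
  using ci_iff[of "{}" T U] unfolding ce_def by auto

lemma root_indep:
  assumes S: "S \<subseteq> nodes" and anc: "anc_closed S" and nF: "Inr F \<notin> S" and F: "F \<in> maxfaces H"
    and b: "b \<in> sets (sigA {Inr F})" and d: "d \<in> sets (sigA S)"
  shows "prob (b \<inter> d) = prob b * prob d"
proof -
  let ?R = "rset S"
  have R: "?R \<subseteq> maxfaces H" using rset_nodes[OF S] .
  have FR: "{F} \<inter> ?R = {}" using nF by (auto simp: rset_def)
  let ?f1 = "\<lambda>\<omega>. restrict (\<lambda>i. Ev i \<omega>) {F}"
  let ?f2 = "\<lambda>\<omega>. restrict (\<lambda>i. Ev i \<omega>) ?R"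
  have iv: "indep_var (PiM {F} NN) ?f1 (PiM ?R NN) ?f2"
    by (rule indep_var_restrict[OF ind FR]) (use F R in auto)
  have m1: "?f1 \<in> measurable Om (PiM {F} NN)" using F by (intro measurable_restrict Evmeas) auto
  have m2: "?f2 \<in> measurable Om (PiM ?R NN)" using R by (intro measurable_restrict Evmeas) auto
  have s1: "?f1 \<in> space Om \<rightarrow> space (PiM {F} NN)" using measurable_space[OF m1] by blast
  have s2: "?f2 \<in> space Om \<rightarrow> space (PiM ?R NN)" using measurable_space[OF m2] by blast
  let ?V1 = "vimage_algebra (space Om) ?f1 (PiM {F} NN)"
  let ?V2 = "vimage_algebra (space Om) ?f2 (PiM ?R NN)"
  have v1: "?f1 \<in> measurable ?V1 (PiM {F} NN)" by (rule measurable_vimage_algebra1[OF s1])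
  have v2: "?f2 \<in> measurable ?V2 (PiM ?R NN)" by (rule measurable_vimage_algebra1[OF s2])
  have E2: "Ev G \<in> measurable ?V2 (NN G)" if G: "G \<in> ?R" for G
  proof -
    have "(\<lambda>\<omega>. ?f2 \<omega> G) \<in> measurable ?V2 (NN G)"
      by (rule measurable_compose[OF v2 measurable_component_singleton[OF G]])
    then show ?thesis using G by simp
  qed
  have sb: "sets (sigA {Inr F}) \<subseteq> sets ?V1"
  proof (rule MC2)
    show "{Inr F} \<subseteq> nodes" using F by (auto simp: aug_nodes_def)
    fix G assume "G \<in> rset {Inr F}"
    then have G: "G = F" by (auto simp: rset_def)
    have "(\<lambda>\<omega>. ?f1 \<omega> F) \<in> measurable ?V1 (NN F)"
      by (rule measurable_compose[OF v1 measurable_component_singleton]) simp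
    then show "Ev G \<in> measurable ?V1 (NN G)" using G by simp
  qed (auto simp: lset_def)
  have sd: "sets (sigA S) \<subseteq> sets ?V2"
  proof (rule MC2[OF S])
    fix v assume "v \<in> lset S"
    then show "(\<lambda>\<omega>. Y \<omega> v) \<in> measurable ?V2 (M v)"
      using Y_meas_anc[of ?V2 S v] anc E2 lset_nodes[OF S] by (auto simp: rset_def lset_def)
  qed (auto intro: E2)
  obtain X1 where X1: "X1 \<in> sets (PiM {F} NN)" "b = ?f1 -` X1 \<inter> space Om"
    using b sb sets_vimage_algebra2[OF s1] by auto
  obtain X2 where X2: "X2 \<in> sets (PiM ?R NN)" "d = ?f2 -` X2 \<inter> space Om"
    using d sd sets_vimage_algebra2[OF s2] by auto
  have "prob ((\<lambda>x. (?f1 x, ?f2 x)) -` (X1 \<times> X2) \<inter> space Om) = prob (?f1 -` X1 \<inter> space Om) * prob (?f2 -` X2 \<inter> space Om)"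
    by (rule indep_varD[OF iv X1(1) X2(1)])
  moreover have "(\<lambda>x. (?f1 x, ?f2 x)) -` (X1 \<times> X2) \<inter> space Om = b \<inter> d"
    using X1(2) X2(2) by auto
  ultimately show ?thesis using X1(2) X2(2) by simp
qed

lemma step_add:
  assumes S: "S \<subseteq> nodes" and anc: "anc_closed S" and v: "v \<in> nodes" and vS: "v \<notin> S"
    and A: "A \<subseteq> S" and B: "B \<subseteq> S" and C: "C \<subseteq> S"
    and par: "\<And>p. (p, v) \<in> D \<Longrightarrow> p \<in> A \<union> C"
    and h: "ci A B C"
  shows "ci (A \<union> {v}) B C"
proof -
  have An: "A \<subseteq> nodes" "B \<subseteq> nodes" "C \<subseteq> nodes" "{v} \<subseteq> nodes" using A B C S v by auto
  show ?thesis
  proof (cases v)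
    case (Inl u)
    have u: "u \<in> V" using v Inl by (auto simp: aug_nodes_def)
    have AC: "A \<union> C \<subseteq> nodes" using An by auto
    have "sets (sigA {v}) \<subseteq> sets (sigA (A \<union> C))"
    proof (rule MC2)
      fix w assume "w \<in> lset {v}"
      then have w: "w = u" using Inl by (auto simp: lset_def)
      have "(\<lambda>\<omega>. Y \<omega> u) \<in> measurable (sigA (A \<union> C)) (M u)"
      proof (rule Y_step[OF space_sigA u])
        fix x assume "x \<in> pas E u"
        then have "Inl x \<in> A \<union> C" using par par_l[OF u] Inl by blast
        then show "(\<lambda>\<omega>. Y \<omega> x) \<in> measurable (sigA (A \<union> C)) (M x)"
          by (intro MC1(1)[OF AC space_sigA order_refl]) (auto simp: lset_def)
      next
        fix F assume "F \<in> fm E H u"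
        then have "Inr F \<in> A \<union> C" using par par_r[OF u] Inl by blast
        then show "Ev F \<in> measurable (sigA (A \<union> C)) (NN F)"
          by (intro MC1(2)[OF AC space_sigA order_refl]) (auto simp: rset_def)
      qed
      then show "(\<lambda>\<omega>. Y \<omega> w) \<in> measurable (sigA (A \<union> C)) (M w)" using w by simp
    next
      fix G assume "G \<in> rset {v}"
      then show "Ev G \<in> measurable (sigA (A \<union> C)) (NN G)" using Inl by (auto simp: rset_def)
    qed (use An in auto)
    then show ?thesis by (rule ci_det[OF An(1) An(4) An(2) An(3) _ h])
  next
    case (Inr F)
    have F: "F \<in> maxfaces H" using v Inr by (auto simp: aug_nodes_def)
    have "ci B {v} (C \<union> A)"
    proof (rule ci_indep[OF An(2) An(4) _ S])
      show "C \<union> A \<subseteq> nodes" using An by auto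
      show "B \<union> (C \<union> A) \<subseteq> S" using A B C by auto
      fix b d assume "b \<in> sets (sigA {v})" "d \<in> sets (sigA S)"
      then show "prob (b \<inter> d) = prob b * prob d"
        using root_indep[OF S anc _ F] vS Inr by auto
    qed
    then have "ci {v} B (C \<union> A)" by (rule ci_sym)
    then show ?thesis by (rule ci_contr[OF An(1) An(4) An(2) An(3) h])
  qed
qed

lemma main_ind:
  assumes Kn: "K \<subseteq> nodes" and Ln: "L \<subseteq> nodes" and Zn: "Z \<subseteq> nodes"
    and KL: "K \<inter> L = {}" and KZ: "K \<inter> Z = {}" and LZ: "L \<inter> Z = {}"
    and hK: "\<And>v p. v \<in> K \<Longrightarrow> (p, v) \<in> D \<Longrightarrow> p \<in> K \<union> Z"
    and hL: "\<And>v p. v \<in> L \<Longrightarrow> (p, v) \<in> D \<Longrightarrow> p \<in> L \<union> Z"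
    and hZ: "\<And>v. v \<in> Z \<Longrightarrow> (\<forall>p. (p, v) \<in> D \<longrightarrow> p \<in> K \<union> Z) \<or> (\<forall>p. (p, v) \<in> D \<longrightarrow> p \<in> L \<union> Z)"
  shows "finite S \<Longrightarrow> anc_closed S \<Longrightarrow> S \<subseteq> K \<union> L \<union> Z \<Longrightarrow> ci (K \<inter> S) (L \<inter> S) (Z \<inter> S)"
proof (induction "card S" arbitrary: S rule: less_induct)
  case less
  show ?case
  proof (cases "S = {}")
    case True
    then show ?thesis using ci_empty by simp
  next
    case False
    have Sn: "S \<subseteq> nodes" using less(4) Kn Ln Zn by auto
    have "Max (rk ` S) \<in> rk ` S" using False less(2) by (intro Max_in) auto
    then obtain v where vS: "v \<in> S" and vmax: "rk v = Max (rk ` S)" by auto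
    have vm: "\<And>x. x \<in> S \<Longrightarrow> rk x \<le> rk v" using vmax less(2) by simp
    define S' where "S' = S - {v}"
    have cardS': "card S' < card S" unfolding S'_def using card_Diff1_less[OF less(2) vS] .
    have finS': "finite S'" using less(2) unfolding S'_def by simp
    have parS: "\<And>p x. x \<in> S \<Longrightarrow> (p, x) \<in> D \<Longrightarrow> p \<in> S" using less(3) unfolding anc_closed_def by blast
    have parv: "\<And>p. (p, v) \<in> D \<Longrightarrow> p \<in> S'"
    proof -
      fix p assume e: "(p, v) \<in> D"
      have "rk p < rk v" using rk_edge[OF e] .
      then show "p \<in> S'" using parS[OF vS e] unfolding S'_def by auto
    qed
    have ancS': "anc_closed S'"
      unfolding anc_closed_def
    proof (intro ballI allI impI)
      fix x p assume x: "x \<in> S'" and e: "(p, x) \<in> D"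
      have "x \<in> S" using x unfolding S'_def by auto
      then have "rk p < rk v" using rk_edge[OF e] vm by (meson order_less_le_trans)
      then show "p \<in> S'" using parS[OF \<open>x \<in> S\<close> e] unfolding S'_def by auto
    qed
    have S'sub: "S' \<subseteq> K \<union> L \<union> Z" using less(4) unfolding S'_def by auto
    have IH: "ci (K \<inter> S') (L \<inter> S') (Z \<inter> S')" using less(1)[OF cardS' finS' ancS' S'sub] .
    have S'n: "S' \<subseteq> nodes" using Sn unfolding S'_def by auto
    have vn: "v \<in> nodes" using Sn vS by auto
    have vS': "v \<notin> S'" unfolding S'_def by auto
    have SS: "S = S' \<union> {v}" using vS unfolding S'_def by auto
    have subs: "K \<inter> S' \<subseteq> S'" "L \<inter> S' \<subseteq> S'" "Z \<inter> S' \<subseteq> S'" by auto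
    have subn: "K \<inter> S' \<subseteq> nodes" "L \<inter> S' \<subseteq> nodes" "Z \<inter> S' \<subseteq> nodes" "{v} \<subseteq> nodes" using S'n vn by auto
    consider "v \<in> K" | "v \<in> L" | "v \<in> Z" using less(4) vS by auto
    then show ?thesis
    proof cases
      case 1
      have eqs: "K \<inter> S = (K \<inter> S') \<union> {v}" "L \<inter> S = L \<inter> S'" "Z \<inter> S = Z \<inter> S'"
        using 1 KL KZ unfolding SS by auto
      have "ci ((K \<inter> S') \<union> {v}) (L \<inter> S') (Z \<inter> S')"
        by (rule step_add[OF S'n ancS' vn vS' subs _ IH]) (use hK[OF 1] parv in auto)
      then show ?thesis unfolding eqs .
    next
      case 2
      have eqs: "K \<inter> S = K \<inter> S'" "L \<inter> S = (L \<inter> S') \<union> {v}" "Z \<inter> S = Z \<inter> S'"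
        using 2 KL LZ unfolding SS by auto
      have "ci ((L \<inter> S') \<union> {v}) (K \<inter> S') (Z \<inter> S')"
        by (rule step_add[OF S'n ancS' vn vS' subs(2,1,3) _ ci_sym[OF IH]]) (use hL[OF 2] parv in auto)
      then show ?thesis unfolding eqs by (rule ci_sym)
    next
      case 3
      have eqs: "K \<inter> S = K \<inter> S'" "L \<inter> S = L \<inter> S'" "Z \<inter> S = (Z \<inter> S') \<union> {v}"
        using 3 KZ LZ unfolding SS by auto
      from hZ[OF 3] show ?thesis
      proof
        assume pK: "\<forall>p. (p, v) \<in> D \<longrightarrow> p \<in> K \<union> Z"
        have "ci ((K \<inter> S') \<union> {v}) (L \<inter> S') (Z \<inter> S')"
          by (rule step_add[OF S'n ancS' vn vS' subs _ IH]) (use pK parv in auto)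
        then have "ci (K \<inter> S') (L \<inter> S') ((Z \<inter> S') \<union> {v})"
          by (rule ci_wu[OF subn(1) subn(4) subn(2) subn(3)])
        then show ?thesis unfolding eqs .
      next
        assume pL: "\<forall>p. (p, v) \<in> D \<longrightarrow> p \<in> L \<union> Z"
        have "ci ((L \<inter> S') \<union> {v}) (K \<inter> S') (Z \<inter> S')"
          by (rule step_add[OF S'n ancS' vn vS' subs(2,1,3) _ ci_sym[OF IH]]) (use pL parv in auto)
        then have "ci (L \<inter> S') (K \<inter> S') ((Z \<inter> S') \<union> {v})"
          by (rule ci_wu[OF subn(2) subn(4) subn(1) subn(3)])
        then show ?thesis unfolding eqs by (rule ci_sym)
      qed
    qed
  qed
qed

end

inductive reach :: "('n \<times> 'n) set \<Rightarrow> 'n set \<Rightarrow> 'n set \<Rightarrow> 'n \<Rightarrow> bool \<Rightarrow> bool" for D A Z where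
  start: "a \<in> A \<Longrightarrow> a \<notin> Z \<Longrightarrow> reach D A Z a False"
| down: "reach D A Z u d \<Longrightarrow> u \<notin> Z \<Longrightarrow> (u, w) \<in> D \<Longrightarrow> reach D A Z w True"
| up: "reach D A Z u d \<Longrightarrow> (w, u) \<in> D \<Longrightarrow> (if d then u \<in> ancestors_of D Z else u \<notin> Z) \<Longrightarrow> reach D A Z w False"

definition inner_ok where
  "inner_ok D Z p \<longleftrightarrow> (\<forall>i. 0 < i \<longrightarrow> i + 1 < length p \<longrightarrow>
     (is_collider D p i \<longrightarrow> p ! i \<in> ancestors_of D Z) \<and> (\<not> is_collider D p i \<longrightarrow> p ! i \<notin> Z))"

lemma not_blocked: "hd p \<notin> Z \<Longrightarrow> last p \<notin> Z \<Longrightarrow> inner_ok D Z p \<Longrightarrow> \<not> blocked D Z p"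
  unfolding blocked_def inner_ok_def by blast

lemma reach_path:
  assumes asym: "\<And>x y. (x, y) \<in> D \<Longrightarrow> (y, x) \<notin> D"
  shows "reach D A Z u d \<Longrightarrow> \<exists>p. is_path D p \<and> hd p \<in> A \<and> hd p \<notin> Z \<and> last p = u \<and> inner_ok D Z p \<and>
      (d \<longrightarrow> length p \<ge> 2 \<and> (p ! (length p - 2), u) \<in> D) \<and>
      (\<not> d \<longrightarrow> length p \<ge> 2 \<longrightarrow> (p ! (length p - 2), u) \<notin> D)"
proof (induction rule: reach.induct)
  case (start a)
  show ?case
    by (rule exI[of _ "[a]"]) (use start in \<open>auto simp: is_path_def inner_ok_def\<close>)
next
  case (down u d w)
  then obtain p where p: "is_path D p" "hd p \<in> A" "hd p \<notin> Z" "last p = u" "inner_ok D Z p"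
    "d \<longrightarrow> length p \<ge> 2 \<and> (p ! (length p - 2), u) \<in> D"
    "\<not> d \<longrightarrow> length p \<ge> 2 \<longrightarrow> (p ! (length p - 2), u) \<notin> D" by blast
  have pne: "p \<noteq> []" using p(1) by (simp add: is_path_def)
  define n where "n = length p"
  have n1: "n \<ge> 1" using pne unfolding n_def by (cases p) auto
  have lastp: "p ! (n - 1) = u" using p(4) pne unfolding n_def by (simp add: last_conv_nth)
  let ?q = "p @ [w]"
  have qn: "\<And>i. i < n \<Longrightarrow> ?q ! i = p ! i" unfolding n_def by (simp add: nth_append)
  have qlast: "?q ! n = w" unfolding n_def by simp
  have lq: "length ?q = n + 1" unfolding n_def by simp
  have path: "is_path D ?q"
    unfolding is_path_def
  proof (intro conjI allI impI)
    fix i assume i: "Suc i < length ?q"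
    show "(?q ! i, ?q ! Suc i) \<in> D \<or> (?q ! Suc i, ?q ! i) \<in> D"
    proof (cases "Suc i < n")
      case True
      then show ?thesis using p(1) qn[of i] qn[of "Suc i"] unfolding is_path_def n_def by auto
    next
      case False
      then have "i = n - 1" "Suc i = n" using i lq by auto
      then show ?thesis using qn[of i] qlast lastp down.hyps(3) n1 by auto
    qed
  qed simp
  have ok: "inner_ok D Z ?q"
    unfolding inner_ok_def
  proof (intro allI impI)
    fix i assume i0: "0 < i" and i1: "i + 1 < length ?q"
    show "(is_collider D ?q i \<longrightarrow> ?q ! i \<in> ancestors_of D Z) \<and> (\<not> is_collider D ?q i \<longrightarrow> ?q ! i \<notin> Z)"
    proof (cases "i + 1 < n")
      case True
      have "is_collider D ?q i = is_collider D p i"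
        unfolding is_collider_def using True qn[of "i - 1"] qn[of i] qn[of "i+1"] by auto
      then show ?thesis using p(5) i0 True qn[of i] unfolding inner_ok_def n_def by auto
    next
      case False
      then have ii: "i = n - 1" using i1 lq by auto
      have qi1: "?q ! (i + 1) = w" using ii n1 qlast by simp
      have qi: "?q ! i = u" using ii qn[of i] lastp n1 by simp
      have "\<not> is_collider D ?q i"
        unfolding is_collider_def using qi qi1 asym[OF down.hyps(3)] by simp
      then show ?thesis using down.hyps(2) qn[of i] lastp ii n1 by auto
    qed
  qed
  show ?case
  proof (rule exI[of _ ?q], intro conjI)
    show "hd ?q \<in> A" "hd ?q \<notin> Z" using p(2,3) pne by auto
    show "last ?q = w" by simp
    show "True \<longrightarrow> 2 \<le> length ?q \<and> (?q ! (length ?q - 2), w) \<in> D"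
      using qn[of "n - 1"] lastp n1 down.hyps(3) lq by auto
  qed (use path ok in auto)
next
  case (up u d w)
  then obtain p where p: "is_path D p" "hd p \<in> A" "hd p \<notin> Z" "last p = u" "inner_ok D Z p"
    "d \<longrightarrow> length p \<ge> 2 \<and> (p ! (length p - 2), u) \<in> D"
    "\<not> d \<longrightarrow> length p \<ge> 2 \<longrightarrow> (p ! (length p - 2), u) \<notin> D" by blast
  have pne: "p \<noteq> []" using p(1) by (simp add: is_path_def)
  define n where "n = length p"
  have n1: "n \<ge> 1" using pne unfolding n_def by (cases p) auto
  have lastp: "p ! (n - 1) = u" using p(4) pne unfolding n_def by (simp add: last_conv_nth)
  let ?q = "p @ [w]"
  have qn: "\<And>i. i < n \<Longrightarrow> ?q ! i = p ! i" unfolding n_def by (simp add: nth_append)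
  have qlast: "?q ! n = w" unfolding n_def by simp
  have lq: "length ?q = n + 1" unfolding n_def by simp
  have path: "is_path D ?q"
    unfolding is_path_def
  proof (intro conjI allI impI)
    fix i assume i: "Suc i < length ?q"
    show "(?q ! i, ?q ! Suc i) \<in> D \<or> (?q ! Suc i, ?q ! i) \<in> D"
    proof (cases "Suc i < n")
      case True
      then show ?thesis using p(1) qn[of i] qn[of "Suc i"] unfolding is_path_def n_def by auto
    next
      case False
      then have "i = n - 1" "Suc i = n" using i lq by auto
      then show ?thesis using qn[of i] qlast lastp up.hyps(2) n1 by auto
    qed
  qed simp
  have ok: "inner_ok D Z ?q"
    unfolding inner_ok_def
  proof (intro allI impI)
    fix i assume i0: "0 < i" and i1: "i + 1 < length ?q"
    show "(is_collider D ?q i \<longrightarrow> ?q ! i \<in> ancestors_of D Z) \<and> (\<not> is_collider D ?q i \<longrightarrow> ?q ! i \<notin> Z)"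
    proof (cases "i + 1 < n")
      case True
      have "is_collider D ?q i = is_collider D p i"
        unfolding is_collider_def using True qn[of "i - 1"] qn[of i] qn[of "i+1"] by auto
      then show ?thesis using p(5) i0 True qn[of i] unfolding inner_ok_def n_def by auto
    next
      case False
      then have ii: "i = n - 1" using i1 lq by auto
      have n2: "n \<ge> 2" using ii i0 by auto
      have qi: "?q ! i = u" "?q ! (i - 1) = p ! (n - 2)" "?q ! (i + 1) = w"
        using ii qn[of i] qn[of "i - 1"] lastp qlast n2 by (auto simp: numeral_2_eq_2)
      have "is_collider D ?q i \<longleftrightarrow> (p ! (n - 2), u) \<in> D"
        unfolding is_collider_def qi using up.hyps(2) by simp
      then show ?thesis using up.hyps(3) p(6,7) qi n2 unfolding n_def by (cases d) auto
    qed
  qed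
  show ?case
  proof (rule exI[of _ ?q], intro conjI)
    show "hd ?q \<in> A" "hd ?q \<notin> Z" using p(2,3) pne by auto
    show "last ?q = w" by simp
    show "\<not> False \<longrightarrow> 2 \<le> length ?q \<longrightarrow> (?q ! (length ?q - 2), w) \<notin> D"
      using qn[of "n - 1"] lastp n1 asym[OF up.hyps(2)] lq by auto
  qed (use path ok in auto)
qed

lemma reach_down_chain:
  assumes "(v, x) \<in> D\<^sup>*" and "reach D A Z v d" and "\<And>y. (v, y) \<in> D\<^sup>* \<Longrightarrow> y \<notin> Z"
  shows "\<exists>d'. reach D A Z x d'"
  using assms(1)
proof (induction rule: rtrancl_induct)
  case base
  then show ?case using assms(2) by blast
next
  case (step y x)
  then obtain d' where "reach D A Z y d'" by blast
  moreover have "y \<notin> Z" using assms(3) step(1) .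
  ultimately show ?case using reach.down[of D A Z y _ x] step(2) by blast
qed

lemma reach_up_chain:
  assumes "(x, t) \<in> D\<^sup>*" and "reach D A Z t False" and "\<And>y. (x, y) \<in> D\<^sup>* \<Longrightarrow> y \<notin> Z"
  shows "reach D A Z x False"
  using assms
proof (induction rule: converse_rtrancl_induct)
  case base
  then show ?case by blast
next
  case (step x y)
  have IH: "reach D A Z y False"
    using step(3)[OF step(4)] step(1,5) by (meson converse_rtrancl_into_rtrancl)
  have "y \<notin> Z" using step(5) step(1) by blast
  then have "if False then y \<in> ancestors_of D Z else y \<notin> Z" by simp
  then show ?case by (rule reach.up[OF IH step(1)])
qed

lemma dsep_partition:
  fixes D :: "('n \<times> 'n) set"
  assumes asym: "\<And>x y. (x, y) \<in> D \<Longrightarrow> (y, x) \<notin> D"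
    and dsep: "d_separated D A B Z"
  defines "An \<equiv> ancestors_of D (A \<union> B \<union> Z)"
  defines "K \<equiv> {u\<in>An. u \<notin> Z \<and> (\<exists>d. reach D A Z u d)}"
  defines "L \<equiv> An - K - Z"
  shows "A \<subseteq> K \<union> Z" and "B \<subseteq> L \<union> Z"
    and "\<And>v p. v \<in> K \<Longrightarrow> (p, v) \<in> D \<Longrightarrow> p \<in> K \<union> Z"
    and "\<And>v p. v \<in> L \<Longrightarrow> (p, v) \<in> D \<Longrightarrow> p \<in> L \<union> Z"
    and "\<And>v. v \<in> Z \<Longrightarrow> (\<forall>p. (p, v) \<in> D \<longrightarrow> p \<in> K \<union> Z) \<or> (\<forall>p. (p, v) \<in> D \<longrightarrow> p \<in> L \<union> Z)"
proof -
  have inAn: "X \<subseteq> An" if "X \<subseteq> A \<union> B \<union> Z" for X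
    using that unfolding An_def ancestors_of_def by blast
  have parAn: "p \<in> An" if "v \<in> An" "(p, v) \<in> D" for p v
    using that unfolding An_def ancestors_of_def by (blast intro: converse_rtrancl_into_rtrancl)
  have BK: "b \<notin> K" if b: "b \<in> B" for b
  proof
    assume "b \<in> K"
    then obtain d where r: "reach D A Z b d" and bZ: "b \<notin> Z" unfolding K_def by blast
    obtain p where p: "is_path D p" "hd p \<in> A" "hd p \<notin> Z" "last p = b" "inner_ok D Z p"
      using reach_path[OF asym r] by blast
    have "\<not> blocked D Z p" using not_blocked[of p Z D] p bZ by simp
    moreover have "blocked D Z p" using dsep p(1,2,4) b unfolding d_separated_def by blast
    ultimately show False by simp
  qed
  show "A \<subseteq> K \<union> Z"
  proof
    fix a assume a: "a \<in> A"
    show "a \<in> K \<union> Z"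
    proof (cases "a \<in> Z")
      case False
      then have "reach D A Z a False" using a by (rule reach.start[rotated]) 
      then show ?thesis using a inAn[of A] False unfolding K_def by blast
    qed simp
  qed
  show "B \<subseteq> L \<union> Z" using BK inAn[of B] unfolding L_def by blast
  show hK: "p \<in> K \<union> Z" if v: "v \<in> K" and e: "(p, v) \<in> D" for v p
  proof (cases "p \<in> Z")
    case False
    have vAn: "v \<in> An" and vZ: "v \<notin> Z" using v unfolding K_def by auto
    obtain d where r: "reach D A Z v d" using v unfolding K_def by blast
    have pAn: "p \<in> An" using parAn[OF vAn e] .
    have "reach D A Z p False"
    proof (cases "d \<longrightarrow> v \<in> ancestors_of D Z")
      case True
      then have "if d then v \<in> ancestors_of D Z else v \<notin> Z" using vZ by auto
      then show ?thesis by (rule reach.up[OF r e])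
    next
      case False
      then have d: "d" and vnZ: "v \<notin> ancestors_of D Z" by auto
      obtain t where t: "t \<in> A \<union> B \<union> Z" "(v, t) \<in> D\<^sup>*" using vAn unfolding An_def ancestors_of_def by blast
      have desc: "y \<notin> Z" if "(v, y) \<in> D\<^sup>*" for y
        using vnZ that unfolding ancestors_of_def by blast
      have tZ: "t \<notin> Z" using desc t(2) .
      obtain d' where rt: "reach D A Z t d'" using reach_down_chain[OF t(2) r desc] by blast
      have tAn: "t \<in> An" using t(1) inAn[of "{t}"] by auto
      have "t \<in> K" using tAn tZ rt unfolding K_def by blast
      then have "t \<notin> B" using BK by blast
      then have tA: "t \<in> A" using t(1) tZ by blast
      have "reach D A Z t False" using reach.start[OF tA tZ] .
      then have rv: "reach D A Z v False" by (rule reach_up_chain[OF t(2) _ desc])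
      have "if False then v \<in> ancestors_of D Z else v \<notin> Z" using vZ by simp
      then show ?thesis by (rule reach.up[OF rv e])
    qed
    then show ?thesis using pAn False unfolding K_def by blast
  qed simp
  show "p \<in> L \<union> Z" if v: "v \<in> L" and e: "(p, v) \<in> D" for v p
  proof (cases "p \<in> Z")
    case False
    have vAn: "v \<in> An" and vZ: "v \<notin> Z" and vK: "v \<notin> K" using v unfolding L_def by auto
    have "p \<notin> K"
    proof
      assume "p \<in> K"
      then obtain d where "reach D A Z p d" "p \<notin> Z" unfolding K_def by blast
      then have "reach D A Z v True" using reach.down[of D A Z p _ v] e by blast
      then show False using vK vAn vZ unfolding K_def by blast
    qed
    then show ?thesis using parAn[OF vAn e] False unfolding L_def by blast
  qed simp
  show "(\<forall>p. (p, v) \<in> D \<longrightarrow> p \<in> K \<union> Z) \<or> (\<forall>p. (p, v) \<in> D \<longrightarrow> p \<in> L \<union> Z)" if v: "v \<in> Z" for v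
  proof (rule ccontr)
    assume "\<not> ?thesis"
    then obtain p1 p2 where e1: "(p1, v) \<in> D" "p1 \<notin> K \<union> Z" and e2: "(p2, v) \<in> D" "p2 \<notin> L \<union> Z" by blast
    have vAn: "v \<in> An" using v inAn[of Z] by auto
    have p1L: "p1 \<in> An" using parAn[OF vAn e1(1)] .
    have p2K: "p2 \<in> K" using parAn[OF vAn e2(1)] e2(2) unfolding L_def by blast
    then obtain d where "reach D A Z p2 d" "p2 \<notin> Z" unfolding K_def by blast
    then have rv: "reach D A Z v True" using reach.down[of D A Z p2 _ v] e2(1) by blast
    have "v \<in> ancestors_of D Z" using v unfolding ancestors_of_def by blast
    then have "reach D A Z p1 False" using reach.up[OF rv e1(1)] by simp
    then show False using p1L e1(2) unfolding K_def by blast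
  qed
qed

context sem begin

lemma D_asym: "(x, y) \<in> D \<Longrightarrow> (y, x) \<notin> D"
proof
  assume "(x, y) \<in> D" "(y, x) \<in> D"
  then have "rk x < rk y" "rk y < rk x" using rk_edge by auto
  then show False by simp
qed

lemma nodes_finite: "finite nodes"
proof -
  have "maxfaces H \<subseteq> Pow V" using hedg by (auto simp: HEDG_def simplicial_complex_def maxfaces_def)
  then have "finite (maxfaces H)" using finV by (meson finite_Pow_iff finite_subset)
  then show ?thesis using finV unfolding aug_nodes_def by simp
qed

lemma edge_nodes: "(p, x) \<in> D \<Longrightarrow> p \<in> nodes \<and> x \<in> nodes"
proof -
  assume "(p, x) \<in> D"
  then obtain v where v: "v \<in> V" "x = Inl v" and c: "(\<exists>u. p = Inl u \<and> u \<in> pas E v) \<or> (\<exists>F. p = Inr F \<and> F \<in> fm E H v)"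
    using par_inv by blast
  have "x \<in> nodes" using v unfolding aug_nodes_def by simp
  moreover have "p \<in> nodes"
    using c
  proof
    assume "\<exists>u. p = Inl u \<and> u \<in> pas E v"
    then obtain u where "p = Inl u" "u \<in> V" using pas_V by blast
    then show ?thesis unfolding aug_nodes_def by simp
  next
    assume "\<exists>F. p = Inr F \<and> F \<in> fm E H v"
    then obtain F where "p = Inr F" "F \<in> maxfaces H" using fm_max by blast
    then show ?thesis unfolding aug_nodes_def by simp
  qed
  ultimately show ?thesis by simp
qed

lemma anc_nodes: assumes "Z \<subseteq> nodes" shows "ancestors_of D Z \<subseteq> nodes"
proof
  fix u assume "u \<in> ancestors_of D Z"
  then obtain z where z: "z \<in> Z" "(u, z) \<in> D\<^sup>*" unfolding ancestors_of_def by blast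
  from z(2) show "u \<in> nodes"
  proof (cases rule: converse_rtranclE)
    case base then show ?thesis using z assms by auto
  next
    case (step y) then show ?thesis using edge_nodes by blast
  qed
qed

lemma sem_dsep:
  assumes A: "A \<subseteq> nodes" and B: "B \<subseteq> nodes" and Z: "Z \<subseteq> nodes"
    and ds: "d_separated D A B Z"
  shows "ci A B Z"
proof -
  define An where "An = ancestors_of D (A \<union> B \<union> Z)"
  define K where "K = {u\<in>An. u \<notin> Z \<and> (\<exists>d. reach D A Z u d)}"
  define L where "L = An - K - Z"
  note part = dsep_partition[OF D_asym ds, folded An_def, folded K_def, folded L_def]
  have Ann: "An \<subseteq> nodes" unfolding An_def using anc_nodes A B Z by auto
  have ZAn: "Z \<subseteq> An" unfolding An_def ancestors_of_def by blast
  have Kn: "K \<subseteq> nodes" and Ln: "L \<subseteq> nodes" using Ann unfolding K_def L_def by auto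
  have finAn: "finite An" using Ann nodes_finite finite_subset by blast
  have ancAn: "anc_closed An"
    unfolding anc_closed_def An_def ancestors_of_def by (blast intro: converse_rtrancl_into_rtrancl)
  have cover: "An \<subseteq> K \<union> L \<union> Z" unfolding L_def by auto
  have "ci (K \<inter> An) (L \<inter> An) (Z \<inter> An)"
    by (rule main_ind[OF Kn Ln Z _ _ _ part(3) part(4) part(5) finAn ancAn cover])
      (auto simp: K_def L_def)
  moreover have "K \<inter> An = K" "L \<inter> An = L" "Z \<inter> An = Z" using ZAn unfolding K_def L_def by auto
  ultimately have c0: "ci K L Z" by simp
  have KZ: "K \<union> Z \<subseteq> nodes" and LZ: "L \<union> Z \<subseteq> nodes" using Kn Ln Z by auto
  have c1: "ci (K \<union> Z) L Z"
    by (rule ci_det[OF Kn Z Ln Z _ c0]) (use sigA_mono[of Z "K \<union> Z"] KZ in auto)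
  have c2: "ci (L \<union> Z) (K \<union> Z) Z"
    by (rule ci_det[OF Ln Z KZ Z _ ci_sym[OF c1]]) (use sigA_mono[of Z "L \<union> Z"] LZ in auto)
  have c3: "ci B (K \<union> Z) Z" by (rule ci_mono[OF part(2) LZ c2])
  show ?thesis by (rule ci_mono[OF part(1) KZ ci_sym[OF c3]])
qed

end

lemma rce_distr:
  assumes P: "prob_space Om" and T: "T \<in> measurable Om X" and Q: "Q = distr Om X T"
    and sCq: "subalgebra Q Cq" and Co: "sets Co = sets (vimage_algebra (space Om) T Cq)"
    and spCo: "space Co = space Om" and s: "s \<in> sets X"
  shows "AE \<omega> in Om. real_cond_exp Om Co (indicator (T -` s \<inter> space Om)) \<omega> = real_cond_exp Q Cq (indicator s) (T \<omega>)"
proof -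
  interpret prob_space Om by fact
  have PQ: "prob_space Q" unfolding Q by (rule prob_space_distr[OF T])
  have sQ: "sets Q = sets X" unfolding Q by simp
  have spQ: "space Q = space X" unfolding Q by simp
  interpret Cq: sigma_finite_subalgebra Q Cq using sfs[OF PQ sCq] .
  have spCq: "space Cq = space X" using sCq spQ by (simp add: subalgebra_def)
  have Ts: "T \<in> space Om \<rightarrow> space Cq" using measurable_space[OF T] spCq by auto
  have setsCo: "sets Co = {T -` B \<inter> space Om | B. B \<in> sets Cq}"
    using Co sets_vimage_algebra2[OF Ts] by simp
  have sCo: "subalgebra Om Co"
    unfolding subalgebra_def
  proof
    show "sets Co \<subseteq> sets Om"
    proof
      fix A assume "A \<in> sets Co"
      then obtain B where B: "B \<in> sets Cq" "A = T -` B \<inter> space Om" using setsCo by auto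
      have "B \<in> sets X" using B(1) sCq sQ by (auto simp: subalgebra_def)
      then show "A \<in> sets Om" using B(2) measurable_sets[OF T] by simp
    qed
  qed (rule spCo)
  interpret Co: sigma_finite_subalgebra Om Co using sfs[OF P sCo] .
  let ?g = "real_cond_exp Q Cq (indicator s)"
  have sQs: "s \<in> sets Q" using s sQ by simp
  have ints: "integrable Q (indicator s :: _ \<Rightarrow> real)" using int_ind[OF PQ sQs] .
  have intg: "integrable Q ?g" using Cq.real_cond_exp_int(1)[OF ints] .
  have QX: "measurable Q (borel :: real measure) = measurable X borel" by (rule measurable_cong_sets[OF sQ refl])
  have gX: "?g \<in> borel_measurable X"
    using borel_measurable_cond_exp2[of Q Cq "indicator s"] unfolding QX .
  have gCq: "?g \<in> borel_measurable Cq" by simp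
  have TCo: "T \<in> measurable Co Cq"
    using measurable_vimage_algebra1[OF Ts] measurable_cong_sets[OF Co refl, of Cq] by simp
  have gT: "(\<lambda>x. ?g (T x)) \<in> borel_measurable Co"
    by (rule measurable_compose[OF TCo gCq])
  have s'M: "T -` s \<inter> space Om \<in> sets Om" using measurable_sets[OF T s] .
  have ints': "integrable Om (indicator (T -` s \<inter> space Om) :: _ \<Rightarrow> real)" using int_ind[OF P s'M] .
  have intgT: "integrable Om (\<lambda>x. ?g (T x))"
    using intg integrable_distr_eq[OF T gX] unfolding Q by simp
  show ?thesis
  proof (rule Co.real_cond_exp_charact)
    fix A assume "A \<in> sets Co"
    then obtain B where B: "B \<in> sets Cq" "A = T -` B \<inter> space Om" using setsCo by auto
    have BX: "B \<in> sets X" using B(1) sCq sQ by (auto simp: subalgebra_def)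
    have m1[measurable]: "(\<lambda>q. indicator B q * indicator s q :: real) \<in> borel_measurable X"
      using BX s by simp
    have m2[measurable]: "(\<lambda>q. indicator B q * ?g q) \<in> borel_measurable X"
      using BX gX by simp
    have "(\<integral>x\<in>A. indicator (T -` s \<inter> space Om) x \<partial>Om) = (\<integral>x. indicator B (T x) * indicator s (T x) \<partial>Om :: real)"
      unfolding set_lebesgue_integral_def B(2)
      by (rule Bochner_Integration.integral_cong) (auto simp: indicator_def)
    also have "\<dots> = (\<integral>q. indicator B q * indicator s q \<partial>Q)"
      by (rule integral_distr[OF T m1, folded Q, symmetric])
    also have "\<dots> = (\<integral>q\<in>B. indicator s q \<partial>Q)"
      unfolding set_lebesgue_integral_def by simp
    also have "\<dots> = (\<integral>q\<in>B. ?g q \<partial>Q)"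
      by (rule Cq.real_cond_exp_intA[OF ints B(1)])
    also have "\<dots> = (\<integral>q. indicator B q * ?g q \<partial>Q)"
      unfolding set_lebesgue_integral_def by simp
    also have "\<dots> = (\<integral>x. indicator B (T x) * ?g (T x) \<partial>Om)"
      by (rule integral_distr[OF T m2, folded Q])
    also have "\<dots> = (\<integral>x\<in>A. ?g (T x) \<partial>Om)"
      unfolding set_lebesgue_integral_def B(2)
      by (rule Bochner_Integration.integral_cong) (auto simp: indicator_def)
    finally show "(\<integral>x\<in>A. indicator (T -` s \<inter> space Om) x \<partial>Om) = (\<integral>x\<in>A. ?g (T x) \<partial>Om)" .
  qed (auto simp: ints' intgT gT)
qed

lemma cond_indep_distr:
  assumes P: "prob_space Om" and T: "T \<in> measurable Om X" and Q: "Q = distr Om X T"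
    and sFq: "subalgebra Q Fq" and sGq: "subalgebra Q Gq" and sCq: "subalgebra Q Cq"
    and Fo: "sets Fo = sets (vimage_algebra (space Om) T Fq)"
    and Go: "sets Go = sets (vimage_algebra (space Om) T Gq)"
    and Co: "sets Co = sets (vimage_algebra (space Om) T Cq)" and spCo: "space Co = space Om"
    and ci: "cond_indep Om Fo Go Co"
  shows "cond_indep Q Fq Gq Cq"
  unfolding cond_indep_def
proof (intro ballI)
  fix a b assume a: "a \<in> sets Fq" and b: "b \<in> sets Gq"
  have sQ: "sets Q = sets X" unfolding Q by simp
  have aX: "a \<in> sets X" using a sFq sQ by (auto simp: subalgebra_def)
  have bX: "b \<in> sets X" using b sGq sQ by (auto simp: subalgebra_def)
  have abX: "a \<inter> b \<in> sets X" using aX bX by auto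
  let ?a = "T -` a \<inter> space Om" and ?b = "T -` b \<inter> space Om"
  have a': "?a \<in> sets Fo" using Fo in_vimage_algebra[OF a] by simp
  have b': "?b \<in> sets Go" using Go in_vimage_algebra[OF b] by simp
  have eqab: "T -` (a \<inter> b) \<inter> space Om = ?a \<inter> ?b" by auto
  have e1: "AE \<omega> in Om. real_cond_exp Om Co (indicator (?a \<inter> ?b)) \<omega> = real_cond_exp Q Cq (indicator (a \<inter> b)) (T \<omega>)"
    using rce_distr[OF P T Q sCq Co spCo abX] unfolding eqab .
  have e2: "AE \<omega> in Om. real_cond_exp Om Co (indicator ?a) \<omega> = real_cond_exp Q Cq (indicator a) (T \<omega>)"
    using rce_distr[OF P T Q sCq Co spCo aX] .
  have e3: "AE \<omega> in Om. real_cond_exp Om Co (indicator ?b) \<omega> = real_cond_exp Q Cq (indicator b) (T \<omega>)"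
    using rce_distr[OF P T Q sCq Co spCo bX] .
  have e4: "AE \<omega> in Om. real_cond_exp Om Co (indicator (?a \<inter> ?b)) \<omega> = real_cond_exp Om Co (indicator ?a) \<omega> * real_cond_exp Om Co (indicator ?b) \<omega>"
    using ci a' b' unfolding cond_indep_def by blast
  have ae: "AE \<omega> in Om. real_cond_exp Q Cq (indicator (a \<inter> b)) (T \<omega>) = real_cond_exp Q Cq (indicator a) (T \<omega>) * real_cond_exp Q Cq (indicator b) (T \<omega>)"
    using e1 e2 e3 e4 by eventually_elim simp
  have QX: "measurable Q (borel :: real measure) = measurable X borel" by (rule measurable_cong_sets[OF sQ refl])
  have m1: "real_cond_exp Q Cq (indicator (a \<inter> b)) \<in> borel_measurable X"
    using borel_measurable_cond_exp2[of Q Cq "indicator (a \<inter> b)"] unfolding QX .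
  have m2: "real_cond_exp Q Cq (indicator a) \<in> borel_measurable X"
    using borel_measurable_cond_exp2[of Q Cq "indicator a"] unfolding QX .
  have m3: "real_cond_exp Q Cq (indicator b) \<in> borel_measurable X"
    using borel_measurable_cond_exp2[of Q Cq "indicator b"] unfolding QX .
  have ms: "{x \<in> space X. real_cond_exp Q Cq (indicator (a \<inter> b)) x = real_cond_exp Q Cq (indicator a) x * real_cond_exp Q Cq (indicator b) x} \<in> sets X"
    by (rule measurable_equality_set[OF m1 borel_measurable_times[OF m2 m3]])
  show "AE \<omega> in Q. real_cond_exp Q Cq (indicator (a \<inter> b)) \<omega> = real_cond_exp Q Cq (indicator a) \<omega> * real_cond_exp Q Cq (indicator b) \<omega>"
  proof -
    have "AE \<omega> in distr Om X T. real_cond_exp Q Cq (indicator (a \<inter> b)) \<omega> = real_cond_exp Q Cq (indicator a) \<omega> * real_cond_exp Q Cq (indicator b) \<omega>"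
      by (subst AE_distr_iff[OF T ms]) (rule ae)
    then show ?thesis unfolding Q[symmetric] .
  qed
qed

context sem begin

definition Tmap where "Tmap \<omega> = (restrict (Y \<omega>) V, restrict (\<lambda>F. Ev F \<omega>) (maxfaces H))"

lemma Tmap_meas: "Tmap \<in> measurable Om (aug_space V H M NN)"
  unfolding Tmap_def aug_space_def
  by (intro measurable_Pair measurable_restrict Ymeas Evmeas)

abbreviation "QQ \<equiv> distr Om (aug_space V H M NN) Tmap"

lemma cp_meas:
  assumes S: "S \<subseteq> nodes"
  shows "coord_proj S \<in> measurable (aug_space V H M NN) (PiM {v. Inl v \<in> S} M \<Otimes>\<^sub>M PiM {F. Inr F \<in> S} NN)"
proof -
  have L: "{v. Inl v \<in> S} \<subseteq> V" and R: "{F. Inr F \<in> S} \<subseteq> maxfaces H" using S by (auto simp: aug_nodes_def)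
  have "(\<lambda>\<omega>. (restrict (fst \<omega>) {v. Inl v \<in> S}, restrict (snd \<omega>) {F. Inr F \<in> S}))
      \<in> measurable (PiM V M \<Otimes>\<^sub>M PiM (maxfaces H) NN) (PiM {v. Inl v \<in> S} M \<Otimes>\<^sub>M PiM {F. Inr F \<in> S} NN)"
  proof (intro measurable_Pair measurable_restrict)
    fix i assume "i \<in> {v. Inl v \<in> S}"
    then have i: "i \<in> V" using L by auto
    show "(\<lambda>\<omega>. fst \<omega> i) \<in> measurable (PiM V M \<Otimes>\<^sub>M PiM (maxfaces H) NN) (M i)"
      by (rule measurable_compose[OF measurable_fst measurable_component_singleton[OF i]])
  next
    fix i assume "i \<in> {F. Inr F \<in> S}"
    then have i: "i \<in> maxfaces H" using R by auto
    show "(\<lambda>\<omega>. snd \<omega> i) \<in> measurable (PiM V M \<Otimes>\<^sub>M PiM (maxfaces H) NN) (NN i)"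
      by (rule measurable_compose[OF measurable_snd measurable_component_singleton[OF i]])
  qed
  then show ?thesis unfolding aug_space_def coord_proj_def .
qed

lemma coord_sub:
  assumes S: "S \<subseteq> nodes"
  shows "subalgebra QQ (coord_alg M NN QQ S)"
  unfolding subalgebra_def
proof
  have cpQ: "coord_proj S \<in> measurable QQ (PiM {v. Inl v \<in> S} M \<Otimes>\<^sub>M PiM {F. Inr F \<in> S} NN)"
    using cp_meas[OF S] measurable_cong_sets[of QQ "aug_space V H M NN"] by simp
  have sp: "coord_proj S \<in> space QQ \<rightarrow> space (PiM {v. Inl v \<in> S} M \<Otimes>\<^sub>M PiM {F. Inr F \<in> S} NN)"
    using measurable_space[OF cpQ] by blast
  show "sets (coord_alg M NN QQ S) \<subseteq> sets QQ"
  proof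
    fix A assume "A \<in> sets (coord_alg M NN QQ S)"
    then obtain B where "B \<in> sets (PiM {v. Inl v \<in> S} M \<Otimes>\<^sub>M PiM {F. Inr F \<in> S} NN)" "A = coord_proj S -` B \<inter> space QQ"
      unfolding coord_alg_def sets_vimage_algebra2[OF sp] by blast
    then show "A \<in> sets QQ" using measurable_sets[OF cpQ] by simp
  qed
qed (simp add: coord_alg_def)

lemma sigA_coord:
  assumes S: "S \<subseteq> nodes"
  shows "sigA S = vimage_algebra (space Om) Tmap (coord_alg M NN QQ S)"
proof -
  have Ts: "Tmap \<in> space Om \<rightarrow> space QQ" using measurable_space[OF Tmap_meas] by simp
  have cps: "coord_proj S \<in> space QQ \<rightarrow> space (PiM {v. Inl v \<in> S} M \<Otimes>\<^sub>M PiM {F. Inr F \<in> S} NN)"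
    using measurable_space[OF cp_meas[OF S]] by simp
  have L: "lset S \<subseteq> V" and R: "rset S \<subseteq> maxfaces H" using lset_nodes[OF S] rset_nodes[OF S] .
  have "vimage_algebra (space Om) Tmap (coord_alg M NN QQ S) =
      vimage_algebra (space Om) (\<lambda>x. coord_proj S (Tmap x)) (PiM {v. Inl v \<in> S} M \<Otimes>\<^sub>M PiM {F. Inr F \<in> S} NN)"
    unfolding coord_alg_def by (rule vimage_algebra_vimage_algebra_eq[OF Ts cps])
  also have "\<dots> = sigA S"
    unfolding sigA_def
  proof (rule vimage_algebra_cong)
    fix \<omega> assume "\<omega> \<in> space Om"
    show "coord_proj S (Tmap \<omega>) = (restrict (Y \<omega>) (lset S), restrict (\<lambda>F. Ev F \<omega>) (rset S))"
      unfolding coord_proj_def Tmap_def using L R by (auto simp: lset_def rset_def restrict_def fun_eq_iff)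
  qed (simp_all add: lset_def rset_def)
  finally show ?thesis by simp
qed

lemma final:
  assumes A: "A \<subseteq> nodes" and B: "B \<subseteq> nodes" and C: "C \<subseteq> nodes" and ds: "d_separated D A B C"
  shows "cond_indep QQ (coord_alg M NN QQ A) (coord_alg M NN QQ B) (coord_alg M NN QQ C)"
proof (rule cond_indep_distr[OF P Tmap_meas refl coord_sub[OF A] coord_sub[OF B] coord_sub[OF C]])
  show "sets (sigA A) = sets (vimage_algebra (space Om) Tmap (coord_alg M NN QQ A))"
    using sigA_coord[OF A] by simp
  show "sets (sigA B) = sets (vimage_algebra (space Om) Tmap (coord_alg M NN QQ B))"
    using sigA_coord[OF B] by simp
  show "sets (sigA C) = sets (vimage_algebra (space Om) Tmap (coord_alg M NN QQ C))"
    using sigA_coord[OF C] by simp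
  show "space (sigA C) = space Om" by simp
  show "cond_indep Om (sigA A) (sigA B) (sigA C)"
    using sem_dsep[OF A B C ds] unfolding ci_def .
qed

end

primrec iterY :: "('v \<times> 'v) set \<Rightarrow> 'v set set \<Rightarrow> ('v \<Rightarrow> ('v \<Rightarrow> 'x) \<times> ('v set \<Rightarrow> real) \<Rightarrow> 'x)
    \<Rightarrow> ('v set \<Rightarrow> 'w \<Rightarrow> real) \<Rightarrow> nat \<Rightarrow> 'w \<Rightarrow> 'v \<Rightarrow> 'x" where
  "iterY E H g Ev 0 w = (\<lambda>_. undefined)"
| "iterY E H g Ev (Suc n) w = (\<lambda>v. g v (restrict (iterY E H g Ev n w) (pas E v), restrict (\<lambda>F. Ev F w) (fm E H v)))"

definition rkv :: "'v set \<Rightarrow> ('v \<times> 'v) set \<Rightarrow> 'v \<Rightarrow> nat" where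
  "rkv V E v = card {u\<in>V. (u, v) \<in> E\<^sup>*}"

lemma pas_V': "E \<subseteq> V \<times> V \<Longrightarrow> pas E v \<subseteq> V"
  by (auto simp: pas_def parents_set_def parents_def)

lemma rkv_lt:
  assumes finV: "finite V" and EV: "E \<subseteq> V \<times> V" and v: "v \<in> V" and u: "u \<in> pas E v"
  shows "rkv V E u < rkv V E v"
proof -
  have fin: "finite {u\<in>V. (u, v) \<in> E\<^sup>*}" using finV by auto
  obtain w' where w': "w' \<in> scc E v" "(u, w') \<in> E" "u \<notin> scc E v"
    using u by (auto simp: pas_def parents_set_def parents_def)
  have "(w', v) \<in> E\<^sup>*" using w' by (auto simp: scc_def anc_def)
  then have uv: "(u, v) \<in> E\<^sup>*" using w' by (meson converse_rtrancl_into_rtrancl)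
  have vu: "(v, u) \<notin> E\<^sup>*" using w' uv by (auto simp: scc_def anc_def desc_def)
  have "{x\<in>V. (x, u) \<in> E\<^sup>*} \<subset> {x\<in>V. (x, v) \<in> E\<^sup>*}"
    using uv vu v by (auto intro: rtrancl_trans)
  then have "card {x\<in>V. (x, u) \<in> E\<^sup>*} < card {x\<in>V. (x, v) \<in> E\<^sup>*}"
    using fin by (intro psubset_card_mono) auto
  then show ?thesis by (simp add: rkv_def)
qed

lemma rkv_le: "finite V \<Longrightarrow> rkv V E v \<le> card V"
  unfolding rkv_def by (intro card_mono) auto

lemma iter_stab:
  assumes finV: "finite V" and EV: "E \<subseteq> V \<times> V"
  shows "\<forall>u\<in>V. rkv V E u < n \<longrightarrow> iterY E H g Ev n w u = iterY E H g Ev (Suc n) w u"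
proof (induction n)
  case 0
  then show ?case by simp
next
  case (Suc n)
  show ?case
  proof (intro ballI impI)
    fix u assume u: "u \<in> V" and r: "rkv V E u < Suc n"
    have "restrict (iterY E H g Ev n w) (pas E u) = restrict (iterY E H g Ev (Suc n) w) (pas E u)"
    proof (rule restrict_ext)
      fix x assume x: "x \<in> pas E u"
      have "x \<in> V" using x pas_V'[OF EV] by auto
      moreover have "rkv V E x < n" using rkv_lt[OF finV EV u x] r by simp
      ultimately show "iterY E H g Ev n w x = iterY E H g Ev (Suc n) w x" using Suc.IH by blast
    qed
    then show "iterY E H g Ev (Suc n) w u = iterY E H g Ev (Suc (Suc n)) w u"
      by (simp only: iterY.simps)
  qed
qed

lemma iter_fix:
  assumes finV: "finite V" and EV: "E \<subseteq> V \<times> V" and v: "v \<in> V"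
  shows "iterY E H g Ev (Suc (card V)) w v =
    g v (restrict (iterY E H g Ev (Suc (card V)) w) (pas E v), restrict (\<lambda>F. Ev F w) (fm E H v))"
proof -
  have "restrict (iterY E H g Ev (card V) w) (pas E v) = restrict (iterY E H g Ev (Suc (card V)) w) (pas E v)"
  proof (rule restrict_ext)
    fix x assume x: "x \<in> pas E v"
    have "x \<in> V" using x pas_V'[OF EV] by auto
    moreover have "rkv V E x < card V" using rkv_lt[OF finV EV v x] rkv_le[OF finV, of E v] by simp
    ultimately show "iterY E H g Ev (card V) w x = iterY E H g Ev (Suc (card V)) w x"
      using iter_stab[OF finV EV, where n="card V" and H=H and g=g and Ev=Ev and w=w] by blast
  qed
  then show ?thesis by (simp only: iterY.simps)
qed

lemma iter_sol:
  assumes finV: "finite V" and EV: "E \<subseteq> V \<times> V"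
    and sol: "\<forall>v\<in>V. x v = g v (restrict x (pas E v), restrict (\<lambda>F. Ev F w) (fm E H v))"
  shows "\<forall>u\<in>V. rkv V E u < n \<longrightarrow> iterY E H g Ev n w u = x u"
proof (induction n)
  case 0
  then show ?case by simp
next
  case (Suc n)
  show ?case
  proof (intro ballI impI)
    fix u assume u: "u \<in> V" and r: "rkv V E u < Suc n"
    have "restrict (iterY E H g Ev n w) (pas E u) = restrict x (pas E u)"
    proof (rule restrict_ext)
      fix y assume y: "y \<in> pas E u"
      have "y \<in> V" using y pas_V'[OF EV] by auto
      moreover have "rkv V E y < n" using rkv_lt[OF finV EV u y] r by simp
      ultimately show "iterY E H g Ev n w y = x y" using Suc.IH by blast
    qed
    then show "iterY E H g Ev (Suc n) w u = x u"
      using sol u by simp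
  qed
qed

theorem mainTheorem1:
  fixes V :: "'v set" and E :: "('v \<times> 'v) set" and H :: "'v set set"
    and M :: "'v \<Rightarrow> 'x measure" and P :: "('v \<Rightarrow> 'x) measure"
  assumes "HEDG V E H"
    and "\<forall>v\<in>V. standard_borel (M v)"
    and "prob_space P" and "sets P = sets (\<Pi>\<^sub>M v\<in>V. M v)"
    and "csSEP TYPE('w) V E H M P"
  shows "smgdGMP V E H M P"
proof -
  obtain Om :: "'w measure" and N :: "'v set \<Rightarrow> real measure" and Ev :: "'v set \<Rightarrow> 'w \<Rightarrow> real"
      and Xr :: "'v \<Rightarrow> 'w \<Rightarrow> 'x" and f :: "'v \<Rightarrow> ('v \<Rightarrow> 'x) \<times> ('v set \<Rightarrow> real) \<Rightarrow> 'x"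
      and g :: "'v \<Rightarrow> ('v \<Rightarrow> 'x) \<times> ('v set \<Rightarrow> real) \<Rightarrow> 'x"
    where P: "prob_space Om" and SB: "\<forall>F\<in>maxfaces H. standard_borel (N F)"
      and ind: "prob_space.indep_vars Om N Ev (maxfaces H)"
      and Xm: "\<forall>v\<in>V. Xr v \<in> measurable Om (M v)"
      and dist: "distr Om (\<Pi>\<^sub>M v\<in>V. M v) (\<lambda>\<omega>. restrict (\<lambda>v. Xr v \<omega>) V) = P"
      and gm: "\<forall>v\<in>V. g v \<in> measurable
          ((\<Pi>\<^sub>M u\<in>parents_set E (scc E v) - scc E v. M u) \<Otimes>\<^sub>M
           (\<Pi>\<^sub>M F\<in>faces_meeting H (scc E v). N F)) (M v)"
      and geq: "\<forall>v\<in>V. AE \<omega> in Om. Xr v \<omega> =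
          g v (restrict (\<lambda>u. Xr u \<omega>) (parents_set E (scc E v) - scc E v),
               restrict (\<lambda>F. Ev F \<omega>) (faces_meeting H (scc E v)))"
    using assms(5) unfolding csSEP_def by blast
  have finV: "finite V" and EV: "E \<subseteq> V \<times> V" using assms(1) by (auto simp: HEDG_def)
  define Y where "Y = iterY E H g Ev (Suc (card V))"
  interpret S: sem Om V E H M N Ev Y g
  proof (rule sem.intro)
    show "prob_space Om" by (rule P)
    show "HEDG V E H" by (rule assms(1))
    show "prob_space.indep_vars Om N Ev (maxfaces H)" by (rule ind)
    fix v assume v: "v \<in> V"
    show "g v \<in> measurable (PiM (pas E v) M \<Otimes>\<^sub>M PiM (fm E H v) N) (M v)"
      using gm v unfolding pas_def fm_def by blast
    fix \<omega> assume "\<omega> \<in> space Om"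
    show "Y \<omega> v = g v (restrict (Y \<omega>) (pas E v), restrict (\<lambda>F. Ev F \<omega>) (fm E H v))"
      unfolding Y_def by (rule iter_fix[OF finV EV v])
  qed
  have geq': "AE \<omega> in Om. \<forall>v\<in>V. Xr v \<omega> = g v (restrict (\<lambda>u. Xr u \<omega>) (pas E v), restrict (\<lambda>F. Ev F \<omega>) (fm E H v))"
    by (rule AE_finite_allI[OF finV]) (use geq in \<open>auto simp: pas_def fm_def\<close>)
  have AEY: "AE \<omega> in Om. restrict (Y \<omega>) V = restrict (\<lambda>v. Xr v \<omega>) V"
    using geq'
  proof eventually_elim
    case (elim \<omega>)
    have "\<forall>u\<in>V. rkv V E u < Suc (card V) \<longrightarrow> iterY E H g Ev (Suc (card V)) \<omega> u = Xr u \<omega>"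
      by (rule iter_sol[OF finV EV]) (use elim in simp)
    then show ?case unfolding Y_def using rkv_le[OF finV] by (auto simp: restrict_def fun_eq_iff less_Suc_eq_le)
  qed
  show ?thesis
    unfolding smgdGMP_def
  proof (intro exI[of _ N] exI[of _ S.QQ] conjI allI impI)
    show "\<forall>F\<in>maxfaces H. standard_borel (N F)" by (rule SB)
    show "prob_space S.QQ" by (rule prob_space.prob_space_distr[OF P S.Tmap_meas])
    show "sets S.QQ = sets (aug_space V H M N)" by simp
    have "distr S.QQ (\<Pi>\<^sub>M v\<in>V. M v) fst = distr Om (\<Pi>\<^sub>M v\<in>V. M v) (fst \<circ> S.Tmap)"
      by (rule distr_distr[OF _ S.Tmap_meas]) (simp add: aug_space_def)
    also have "\<dots> = distr Om (\<Pi>\<^sub>M v\<in>V. M v) (\<lambda>\<omega>. restrict (\<lambda>v. Xr v \<omega>) V)"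
    proof (rule distr_cong_AE)
      show "AE x in Om. (fst \<circ> S.Tmap) x = restrict (\<lambda>v. Xr v x) V"
        using AEY by (simp add: S.Tmap_def)
      show "fst \<circ> S.Tmap \<in> measurable Om (\<Pi>\<^sub>M v\<in>V. M v)"
        using measurable_comp[OF S.Tmap_meas, of fst] by (simp add: aug_space_def)
      show "(\<lambda>\<omega>. restrict (\<lambda>v. Xr v \<omega>) V) \<in> measurable Om (\<Pi>\<^sub>M v\<in>V. M v)"
        using Xm by (intro measurable_restrict) auto
    qed simp_all
    also have "\<dots> = P" by (rule dist)
    finally show "distr S.QQ (\<Pi>\<^sub>M v\<in>V. M v) fst = P" .
    fix A B C
    assume "A \<subseteq> aug_nodes V H" "B \<subseteq> aug_nodes V H" "C \<subseteq> aug_nodes V H" "d_separated (acag V E H) A B C"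
    then show "cond_indep S.QQ (coord_alg M N S.QQ A) (coord_alg M N S.QQ B) (coord_alg M N S.QQ C)"
      by (rule S.final)
  qed
qed

end
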